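(* Fix positive integers $\beta,p$. There is an algorithm which, given $n$ and a vector $\mathbf{c}\in\mathcal{S}_n(\beta,p)$, outputs $ord(\mathbf{c})$, the order of $\mathbf{c}$ in $\mathcal{S}_n(\beta,p)$; its time complexity and space complexity are both $O(n)$.
   Context: A binary vector is $(\beta,p)$-window-weight-limited (WWL) if every $\beta$ consecutive entries contain at most $p$ ones; $\mathcal{S}_n(\beta,p)$ is the set of $(\beta,p)$-WWL vectors of length $n$. For $\mathbf{x}=(x_1,\ldots,x_n)\in\{0,1\}^n$ let $\psi(\mathbf{x})=\sum_{k=1}^n x_k2^{n-k}$ (so $x_1$ is the most significant bit), and write $\mathbf{x}\preceq\mathbf{y}$ iff $\psi(\mathbf{x})\le\psi(\mathbf{y})$. For a set $X$ of distinct binary vectors of length $n$ and $\mathbf{x}\in X$, $ord(\mathbf{x})=|\{\mathbf{y}\in X:\mathbf{y}\preceq\mathbf{x}\}|$; thus $ord$ is a bijection from $\mathcal{S}_n(\beta,p)$ to $\{1,\ldots,|\mathcal{S}_n(\beta,p)|\}$. Complexity is measured with $\beta,p$ fixed, counting arithmetic operations and storage of integers at unit cost. *)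

theory Defs
  imports Main
begin

text \<open>Binary vectors of length n are lists of naturals with entries in {0,1};
  entry x!k (0-based) is the paper's x_(k+1).\<close>

definition wwl :: "nat \<Rightarrow> nat \<Rightarrow> nat list \<Rightarrow> bool" where
  "wwl \<beta> p x \<longleftrightarrow> (\<forall>i. i + \<beta> \<le> length x \<longrightarrow> sum_list (take \<beta> (drop i x)) \<le> p)"

definition S :: "nat \<Rightarrow> nat \<Rightarrow> nat \<Rightarrow> nat list set" where
  "S n \<beta> p = {x. length x = n \<and> set x \<subseteq> {0,1} \<and> wwl \<beta> p x}"

definition psi :: "nat list \<Rightarrow> nat" where
  "psi x = (\<Sum>k<length x. x ! k * 2 ^ (length x - 1 - k))"

definition ord_in :: "nat list set \<Rightarrow> nat list \<Rightarrow> nat" where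
  "ord_in X x = card {y \<in> X. psi y \<le> psi x}"

text \<open>Memory cells indexed by nat hold unbounded integers; every instruction
  costs one time unit. Indirect addressing uses the (truncated) integer in a cell.\<close>

datatype instr =
    Const nat int
  | Add nat nat nat
  | Sub nat nat nat
  | Mul nat nat nat
  | Div nat nat nat
  | Mod nat nat nat
  | Load nat nat
  | Store nat nat
  | Jle nat nat
  | Jmp nat
  | Halt

type_synonym config = "nat \<times> (nat \<Rightarrow> int)"

definition halted :: "instr list \<Rightarrow> config \<Rightarrow> bool" where
  "halted P c \<longleftrightarrow> fst c \<ge> length P \<or> P ! fst c = Halt"

fun exec_instr :: "instr \<Rightarrow> config \<Rightarrow> config" where
  "exec_instr (Const r k) (pc, m) = (pc + 1, m(r := k))"
| "exec_instr (Add r a b) (pc, m) = (pc + 1, m(r := m a + m b))"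
| "exec_instr (Sub r a b) (pc, m) = (pc + 1, m(r := m a - m b))"
| "exec_instr (Mul r a b) (pc, m) = (pc + 1, m(r := m a * m b))"
| "exec_instr (Div r a b) (pc, m) = (pc + 1, m(r := m a div m b))"
| "exec_instr (Mod r a b) (pc, m) = (pc + 1, m(r := m a mod m b))"
| "exec_instr (Load r a) (pc, m) = (pc + 1, m(r := m (nat (m a))))"
| "exec_instr (Store a r) (pc, m) = (pc + 1, m(nat (m a) := m r))"
| "exec_instr (Jle r l) (pc, m) = (if m r \<le> 0 then (l, m) else (pc + 1, m))"
| "exec_instr (Jmp l) (pc, m) = (l, m)"
| "exec_instr Halt (pc, m) = (pc, m)"

fun accessed :: "instr \<Rightarrow> (nat \<Rightarrow> int) \<Rightarrow> nat set" where
  "accessed (Const r k) m = {r}"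
| "accessed (Add r a b) m = {r, a, b}"
| "accessed (Sub r a b) m = {r, a, b}"
| "accessed (Mul r a b) m = {r, a, b}"
| "accessed (Div r a b) m = {r, a, b}"
| "accessed (Mod r a b) m = {r, a, b}"
| "accessed (Load r a) m = {r, a, nat (m a)}"
| "accessed (Store a r) m = {a, r, nat (m a)}"
| "accessed (Jle r l) m = {r}"
| "accessed (Jmp l) m = {}"
| "accessed Halt m = {}"

definition step :: "instr list \<Rightarrow> config \<Rightarrow> config" where
  "step P c = (if halted P c then c else exec_instr (P ! fst c) c)"

definition steps :: "instr list \<Rightarrow> nat \<Rightarrow> config \<Rightarrow> config" where
  "steps P t c = (step P ^^ t) c"

definition step_cells :: "instr list \<Rightarrow> config \<Rightarrow> nat set" where
  "step_cells P c = (if halted P c then {} else accessed (P ! fst c) (snd c))"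

definition space_used :: "instr list \<Rightarrow> nat \<Rightarrow> config \<Rightarrow> nat" where
  "space_used P t c = card (\<Union>i<t. step_cells P (steps P i c))"

text \<open>Input convention: cell 0 holds n, cells 1..n hold the entries of the
  vector, all other cells hold 0; execution starts at instruction 0.
  The output is read from cell 0 when the machine halts.\<close>
definition init :: "nat \<Rightarrow> nat list \<Rightarrow> config" where
  "init n c = (0, (\<lambda>i. if i = 0 then int n
                        else if i \<le> length c then int (c ! (i - 1)) else 0))"

end

theory Submission
  imports Defs
begin


lemma psi_Nil[simp]: "psi [] = 0" by (simp add: psi_def)

lemma psi_snoc: "psi (y @ [b]) = 2 * psi y + b"
proof -
  have "psi (y @ [b]) = (\<Sum>k<Suc (length y). (y@[b]) ! k * 2 ^ (length y - k))"
    by (simp add: psi_def)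
  also have "\<dots> = (\<Sum>k<length y. y ! k * 2 ^ (length y - k)) + b"
    by (simp add: nth_append)
  also have "(\<Sum>k<length y. y ! k * 2 ^ (length y - k)) = 2 * psi y"
    unfolding psi_def sum_distrib_left
    by (rule sum.cong) (auto simp: Suc_diff_Suc power_Suc[symmetric] simp del: power_Suc)
  finally show ?thesis by simp
qed

definition bits :: "nat \<Rightarrow> nat list set" where
  "bits k = {y. length y = k \<and> set y \<subseteq> {0,1}}"

lemma finite_bits: "finite (bits k)"
proof -
  have "bits k \<subseteq> {y. set y \<subseteq> {0,1} \<and> length y = k}" by (auto simp: bits_def)
  thus ?thesis using finite_lists_length_eq[of "{0::nat,1}" k] by (auto intro: finite_subset)
qed

lemma psi_less: "set y \<subseteq> {0,1} \<Longrightarrow> psi y < 2 ^ length y"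
proof (induction y rule: rev_induct)
  case Nil then show ?case by simp
next
  case (snoc x xs) then show ?case by (auto simp: psi_snoc)
qed

lemma psi_inj: "length y = length z \<Longrightarrow> set y \<subseteq> {0,1} \<Longrightarrow> set z \<subseteq> {0,1} \<Longrightarrow> psi y = psi z \<Longrightarrow> y = z"
proof (induction y arbitrary: z rule: rev_induct)
  case Nil then show ?case by simp
next
  case (snoc x xs)
  then obtain zs w where z: "z = zs @ [w]" by (metis length_0_conv list.distinct(1) rev_exhaust length_append_singleton)
  with snoc.prems have "2 * psi xs + x = 2 * psi zs + w" "x \<in> {0,1}" "w \<in> {0,1}"
    by (auto simp: psi_snoc)
  hence "x = w" "psi xs = psi zs" by auto presburger+
  with snoc z show ?case by auto
qed

lemma bits_Suc: "bits (Suc k) = (\<lambda>(y,b). y @ [b]) ` (bits k \<times> {0,1})"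
proof
  show "bits (Suc k) \<subseteq> (\<lambda>(y,b). y @ [b]) ` (bits k \<times> {0,1})"
  proof
    fix z assume "z \<in> bits (Suc k)"
    hence z: "length z = Suc k" "set z \<subseteq> {0,1}" unfolding bits_def by auto
    then obtain y b where "z = y @ [b]" by (metis length_Suc_conv rev_exhaust list.distinct(1))
    with z have "z = y @ [b]" "length y = k" "set z \<subseteq> {0,1}" by auto
    thus "z \<in> (\<lambda>(y,b). y @ [b]) ` (bits k \<times> {0,1})" unfolding bits_def by force
  qed
qed (auto simp: bits_def)

lemma sum_bits_Suc: "(\<Sum>z\<in>bits (Suc k). f z) = (\<Sum>y\<in>bits k. f (y @ [0]) + f (y @ [1]))"
proof -
  have inj: "inj_on (\<lambda>(y,b). y @ [b]) (bits k \<times> {0::nat,1})"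
    by (auto simp: inj_on_def)
  have "(\<Sum>z\<in>bits (Suc k). f z) = (\<Sum>yb\<in>bits k \<times> {0,1}. f ((\<lambda>(y,b). y @ [b]) yb))"
    unfolding bits_Suc by (rule sum.reindex[OF inj, unfolded comp_def])
  also have "\<dots> = (\<Sum>y\<in>bits k. \<Sum>b\<in>{0,1}. f (y @ [b]))"
    using sum.cartesian_product[of "\<lambda>y b. f (y @ [b])" "{0,1}" "bits k"]
    by (simp add: split_def)
  finally show ?thesis by simp
qed


lemma psi_append: "psi (xs @ ys) = psi xs * 2 ^ length ys + psi ys"
proof (induction ys rule: rev_induct)
  case Nil then show ?case by simp
next
  case (snoc x ys)
  have "psi (xs @ ys @ [x]) = 2 * psi (xs @ ys) + x" using psi_snoc[of "xs @ ys" x] by simp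
  then show ?case using snoc by (simp add: psi_snoc algebra_simps)
qed

lemma psi_mod: "set zs \<subseteq> {0,1} \<Longrightarrow> psi zs mod 2 ^ j = psi (drop (length zs - j) zs)"
proof -
  assume b: "set zs \<subseteq> {0,1}"
  let ?t = "length zs - j"
  have zs: "zs = take ?t zs @ drop ?t zs" by simp
  have lt: "psi (drop ?t zs) < 2 ^ j"
  proof -
    have "psi (drop ?t zs) < 2 ^ length (drop ?t zs)"
      using b by (intro psi_less) (meson order_trans set_drop_subset)
    also have "\<dots> \<le> 2 ^ j" by (intro power_increasing) auto
    finally show ?thesis .
  qed
  have "psi zs = psi (take ?t zs) * 2 ^ length (drop ?t zs) + psi (drop ?t zs)"
    by (subst zs, subst psi_append) simp
  moreover have "length (drop ?t zs) = j \<or> ?t = 0" by auto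
  ultimately show ?thesis using lt by (auto simp: mod_mult_self3)
qed

fun pop :: "nat \<Rightarrow> nat" where
  "pop s = (if s = 0 then 0 else s mod 2 + pop (s div 2))"

declare pop.simps[simp del]

lemma pop_step: "pop s = pop (s div 2) + s mod 2"
  by (cases "s = 0") (simp add: pop.simps, subst pop.simps, simp)

lemma pop_2: "b \<le> 1 \<Longrightarrow> pop (2 * x + b) = pop x + b"
  by (subst pop_step) auto

lemma pop_psi: "set zs \<subseteq> {0,1} \<Longrightarrow> pop (psi zs) = sum_list zs"
proof (induction zs rule: rev_induct)
  case Nil then show ?case by (simp add: pop.simps)
next
  case (snoc x xs) then show ?case using pop_2[of 0 "psi xs"] pop_2[of 1 "psi xs"] by (auto simp: psi_snoc)
qed

definition st :: "nat \<Rightarrow> nat list \<Rightarrow> nat" where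
  "st \<beta> y = psi y mod 2 ^ (\<beta> - 1)"

definition ok :: "nat \<Rightarrow> nat \<Rightarrow> nat \<Rightarrow> nat \<Rightarrow> nat \<Rightarrow> bool" where
  "ok \<beta> p k s b \<longleftrightarrow> (k + 1 < \<beta> \<or> pop s + b \<le> p)"

lemma wwl_snoc_raw:
  assumes "\<beta> > 0"
  shows "wwl \<beta> p (y @ [b]) \<longleftrightarrow> wwl \<beta> p y \<and> (length y + 1 < \<beta> \<or> sum_list (drop (length y + 1 - \<beta>) y) + b \<le> p)"
proof -
  have A: "take \<beta> (drop i (y @ [b])) = take \<beta> (drop i y)" if "i + \<beta> \<le> length y" for i
    using that by (simp add: drop_append)
  have B: "take \<beta> (drop (length y + 1 - \<beta>) (y @ [b])) = drop (length y + 1 - \<beta>) y @ [b]"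
    if "length y + 1 \<ge> \<beta>" using that assms by (simp add: drop_append)
  show ?thesis
  proof
    assume w: "wwl \<beta> p (y @ [b])"
    have "wwl \<beta> p y" unfolding wwl_def
    proof (intro allI impI)
      fix i assume "i + \<beta> \<le> length y"
      with w A[OF this] show "sum_list (take \<beta> (drop i y)) \<le> p" unfolding wwl_def
        by (metis length_append_singleton le_SucI)
    qed
    moreover have "length y + 1 < \<beta> \<or> sum_list (drop (length y + 1 - \<beta>) y) + b \<le> p"
    proof (cases "length y + 1 < \<beta>")
      case False
      with w B[of] have "sum_list (take \<beta> (drop (length y + 1 - \<beta>) (y @ [b]))) \<le> p"
        unfolding wwl_def by (metis False add_leD1 le_add_diff_inverse2 length_append_singleton not_le Suc_eq_plus1 order_refl)
      with B False assms show ?thesis by simp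
    qed simp
    ultimately show "wwl \<beta> p y \<and> (length y + 1 < \<beta> \<or> sum_list (drop (length y + 1 - \<beta>) y) + b \<le> p)" ..
  next
    assume r: "wwl \<beta> p y \<and> (length y + 1 < \<beta> \<or> sum_list (drop (length y + 1 - \<beta>) y) + b \<le> p)"
    show "wwl \<beta> p (y @ [b])" unfolding wwl_def
    proof (intro allI impI)
      fix i assume i: "i + \<beta> \<le> length (y @ [b])"
      show "sum_list (take \<beta> (drop i (y @ [b]))) \<le> p"
      proof (cases "i + \<beta> \<le> length y")
        case True then show ?thesis using A r unfolding wwl_def by simp
      next
        case False
        with i have "i = length y + 1 - \<beta>" "\<not> length y + 1 < \<beta>" by auto
        with B r assms show ?thesis by simp
      qed
    qed
  qed
qed

lemma wwl_snoc:
  assumes "\<beta> > 0" "set y \<subseteq> {0,1}"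
  shows "wwl \<beta> p (y @ [b]) \<longleftrightarrow> wwl \<beta> p y \<and> ok \<beta> p (length y) (st \<beta> y) b"
proof -
  have "sum_list (drop (length y + 1 - \<beta>) y) = pop (st \<beta> y)"
    unfolding st_def using assms
    by (subst psi_mod, simp, subst pop_psi) (auto dest: in_set_dropD)
  then show ?thesis using wwl_snoc_raw[OF assms(1)] unfolding ok_def by simp
qed

lemma wwl_take: "wwl \<beta> p x \<Longrightarrow> wwl \<beta> p (take j x)"
  unfolding wwl_def
proof (intro allI impI)
  fix i assume w: "\<forall>i. i + \<beta> \<le> length x \<longrightarrow> sum_list (take \<beta> (drop i x)) \<le> p"
    and i: "i + \<beta> \<le> length (take j x)"
  have "take \<beta> (drop i (take j x)) = take \<beta> (drop i x)"
    using i by (simp add: drop_take take_take min_def split: if_splits)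
  with w i show "sum_list (take \<beta> (drop i (take j x))) \<le> p" by simp
qed

lemma st_snoc: "st \<beta> (y @ [b]) = (2 * st \<beta> y + b) mod 2 ^ (\<beta> - 1)"
  unfolding st_def psi_snoc by (metis mod_add_left_eq mod_mult_right_eq)



definition V :: "nat \<Rightarrow> nat \<Rightarrow> nat list \<Rightarrow> nat \<Rightarrow> nat \<Rightarrow> nat" where
  "V \<beta> p c k s = card {y \<in> bits k. wwl \<beta> p y \<and> psi y < psi (take k c) \<and> st \<beta> y = s}"

lemma V0: "V \<beta> p c 0 s = 0"
  unfolding V_def bits_def by simp

lemma card_ind: "finite A \<Longrightarrow> card {y \<in> A. P y} = (\<Sum>y\<in>A. if P y then 1 else 0)"
  by (simp add: sum.If_cases Int_def)

lemma fiber: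
  fixes f :: "'a \<Rightarrow> nat"
  assumes "finite A" "\<And>y. y \<in> A \<Longrightarrow> f y < M"
  shows "(\<Sum>y\<in>A. (g (f y) :: nat)) = (\<Sum>s<M. g s * card {y\<in>A. f y = s})"
proof -
  have "(\<Sum>s<M. \<Sum>y\<in>{y. y \<in> A \<and> f y = s}. g (f y)) = (\<Sum>y\<in>A. g (f y))"
    using assms by (intro sum.group) auto
  moreover have "(\<Sum>y\<in>{y. y \<in> A \<and> f y = s}. g (f y)) = g s * card {y\<in>A. f y = s}" for s
  proof -
    have "(\<Sum>y\<in>{y. y \<in> A \<and> f y = s}. g (f y)) = (\<Sum>y\<in>{y. y \<in> A \<and> f y = s}. g s)"
      by (rule sum.cong) auto
    then show ?thesis by (simp add: mult.commute)
  qed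
  ultimately show ?thesis by (simp add: mult.commute)
qed

lemma st_less: "st \<beta> y < 2 ^ (\<beta> - 1)"
  unfolding st_def by simp

lemma Vrec:
  assumes b0: "\<beta> > 0" and cS: "c \<in> S n \<beta> p" and kn: "k < n"
  shows "V \<beta> p c (Suc k) s' =
    (\<Sum>s<2^(\<beta>-1). (if ok \<beta> p k s 0 \<and> (2*s) mod 2^(\<beta>-1) = s' then V \<beta> p c k s else 0)
                  + (if ok \<beta> p k s 1 \<and> (2*s+1) mod 2^(\<beta>-1) = s' then V \<beta> p c k s else 0))
    + (if c!k = 1 \<and> (2 * st \<beta> (take k c)) mod 2^(\<beta>-1) = s' then 1 else 0)"
proof -
  define M where "M = (2::nat)^(\<beta>-1)"
  define T where "T = take k c"
  define ck where "ck = c ! k"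
  have cl: "length c = n" and cb: "set c \<subseteq> {0,1}" and cw: "wwl \<beta> p c" using cS by (auto simp: S_def)
  have Tb: "T \<in> bits k" using cl cb kn unfolding T_def bits_def by (auto dest: in_set_takeD)
  have ck: "ck \<in> {0,1}" using cb cl kn unfolding ck_def by (auto simp: nth_mem subset_iff)
  have tk: "take (Suc k) c = T @ [ck]" unfolding T_def ck_def using cl kn by (simp add: take_Suc_conv_app_nth)
  have wT: "wwl \<beta> p (T @ [ck])" using wwl_take[OF cw, of "Suc k"] tk by simp
  have Tbits: "set T \<subseteq> {0,1}" using Tb by (simp add: bits_def)
  have wT': "wwl \<beta> p T" "ok \<beta> p k (st \<beta> T) 0"
    using wT wwl_snoc[OF b0 Tbits, of p ck] Tb by (auto simp: bits_def ok_def)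
  define Yk where "Yk = {y \<in> bits k. wwl \<beta> p y \<and> psi y < psi T}"
  have fY: "finite Yk" unfolding Yk_def using finite_bits by simp
  define Q where "Q z \<longleftrightarrow> wwl \<beta> p z \<and> psi z < psi (T @ [ck]) \<and> st \<beta> z = s'" for z
  define R where "R y b \<longleftrightarrow> y \<in> Yk \<and> ok \<beta> p k (st \<beta> y) b \<and> (2 * st \<beta> y + b) mod M = s'" for y b
  define E where "E b \<longleftrightarrow> b < ck \<and> ok \<beta> p k (st \<beta> T) b \<and> (2 * st \<beta> T + b) mod M = s'" for b :: nat
  have split: "(if Q (y @ [b]) then 1 else 0) = (if R y b then 1 else 0) + (if y = T \<and> E b then (1::nat) else 0)"
    if y: "y \<in> bits k" and b: "b \<in> {0,1}" for y b
  proof -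
    have yb: "set y \<subseteq> {0,1}" "length y = k" using y by (auto simp: bits_def)
    have "Q (y @ [b]) \<longleftrightarrow> wwl \<beta> p y \<and> ok \<beta> p k (st \<beta> y) b \<and>
         (psi y < psi T \<or> (psi y = psi T \<and> b < ck)) \<and> (2 * st \<beta> y + b) mod M = s'"
      unfolding Q_def using wwl_snoc[OF b0 yb(1)] yb b ck
      by (auto simp: psi_snoc st_snoc M_def)
    also have "(psi y = psi T) \<longleftrightarrow> y = T"
      using psi_inj[of y T] yb Tb by (auto simp: bits_def)
    finally show ?thesis unfolding R_def E_def Yk_def using y wT' by auto
  qed
  have "V \<beta> p c (Suc k) s' = (\<Sum>z\<in>bits (Suc k). if Q z then 1 else 0)"
    unfolding V_def Q_def using tk T_def by (subst card_ind[OF finite_bits]) simp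
  also have "\<dots> = (\<Sum>y\<in>bits k. (if Q (y@[0]) then 1 else 0) + (if Q (y@[1]) then 1 else 0))"
    by (rule sum_bits_Suc)
  also have "\<dots> = (\<Sum>y\<in>bits k. ((if R y 0 then 1 else 0) + (if R y 1 then 1 else 0))
        + ((if y = T \<and> E 0 then 1 else 0) + (if y = T \<and> E 1 then 1 else 0)))"
    by (rule sum.cong) (simp_all add: split)
  also have "\<dots> = (\<Sum>y\<in>bits k. (if R y 0 then 1 else 0) + (if R y 1 then 1 else 0))
        + (\<Sum>y\<in>bits k. (if y = T \<and> E 0 then 1 else 0) + (if y = T \<and> E 1 then 1 else 0))"
    by (rule sum.distrib)
  finally have X: "V \<beta> p c (Suc k) s' = (\<Sum>y\<in>bits k. (if R y 0 then 1 else 0) + (if R y 1 then 1 else 0))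
        + (\<Sum>y\<in>bits k. (if y = T \<and> E 0 then 1 else 0) + (if y = T \<and> E 1 then 1 else 0))" .
  have HB: "(\<Sum>y\<in>bits k. (if y = T \<and> E 0 then 1 else 0) + (if y = T \<and> E 1 then (1::nat) else 0))
      = (if ck = 1 \<and> (2 * st \<beta> T) mod M = s' then 1 else 0)"
  proof -
    have "{x. x = T \<and> x \<in> bits k} = {T}" using Tb by auto
    then have "(\<Sum>y\<in>bits k. (if y = T \<and> E 0 then 1 else 0) + (if y = T \<and> E 1 then (1::nat) else 0))
      = (if E 0 then 1 else 0) + (if E 1 then 1 else 0)"
      using Tb finite_bits by (simp add: sum.distrib sum.If_cases Int_def)
    moreover have "(if E 1 then 1 else (0::nat)) = 0" using ck unfolding E_def by auto
    moreover have "(if E 0 then 1 else (0::nat)) = (if ck = 1 \<and> (2 * st \<beta> T) mod M = s' then 1 else 0)"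
      using ck wT' unfolding E_def by auto
    ultimately show ?thesis by simp
  qed
  have HA1: "(\<Sum>y\<in>bits k. (if R y 0 then 1 else 0) + (if R y 1 then (1::nat) else 0))
      = (\<Sum>y\<in>Yk. (\<lambda>s. (if ok \<beta> p k s 0 \<and> (2*s) mod M = s' then 1 else 0)
                   + (if ok \<beta> p k s 1 \<and> (2*s+1) mod M = s' then 1 else 0)) (st \<beta> y))"
  proof -
    have sub: "Yk \<subseteq> bits k" unfolding Yk_def by auto
    show ?thesis unfolding R_def
      by (rule sum.mono_neutral_cong_right[OF finite_bits sub]) auto
  qed
  have HA2: "(\<Sum>y\<in>Yk. (\<lambda>s. (if ok \<beta> p k s 0 \<and> (2*s) mod M = s' then 1 else 0)
                   + (if ok \<beta> p k s 1 \<and> (2*s+1) mod M = s' then 1 else 0)) (st \<beta> y))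
     = (\<Sum>s<M. ((if ok \<beta> p k s 0 \<and> (2*s) mod M = s' then 1 else 0)
                   + (if ok \<beta> p k s 1 \<and> (2*s+1) mod M = s' then 1 else 0)) * card {y\<in>Yk. st \<beta> y = s})"
    by (rule fiber[OF fY]) (auto simp: st_def M_def)
  have tw: "((if a then 1 else 0) + (if b then 1 else 0)) * (v::nat) = (if a then v else 0) + (if b then v else 0)" for a b v
    by auto
  have cV: "card {y\<in>Yk. st \<beta> y = s} = V \<beta> p c k s" for s
    unfolding V_def Yk_def T_def by (rule arg_cong[where f=card]) auto
  have HA3: "(\<Sum>s<M. ((if ok \<beta> p k s 0 \<and> (2*s) mod M = s' then 1 else 0)
                   + (if ok \<beta> p k s 1 \<and> (2*s+1) mod M = s' then 1 else 0)) * card {y\<in>Yk. st \<beta> y = s})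
     = (\<Sum>s<M. (if ok \<beta> p k s 0 \<and> (2*s) mod M = s' then V \<beta> p c k s else 0)
                  + (if ok \<beta> p k s 1 \<and> (2*s+1) mod M = s' then V \<beta> p c k s else 0))"
    by (rule sum.cong[OF refl]) (simp only: tw cV)
  show ?thesis using X HB HA1 HA2 HA3 unfolding M_def T_def ck_def by simp
qed

lemma ord_V:
  assumes cS: "c \<in> S n \<beta> p"
  shows "ord_in (S n \<beta> p) c = Suc (\<Sum>s<2^(\<beta>-1). V \<beta> p c n s)"
proof -
  have cl: "length c = n" and cb: "set c \<subseteq> {0,1}" using cS by (auto simp: S_def)
  define Yn where "Yn = {y \<in> bits n. wwl \<beta> p y \<and> psi y < psi c}"
  have fY: "finite Yn" unfolding Yn_def using finite_bits by simp
  have eq: "{y \<in> S n \<beta> p. psi y \<le> psi c} = insert c Yn"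
  proof
    show "{y \<in> S n \<beta> p. psi y \<le> psi c} \<subseteq> insert c Yn"
    proof
      fix y assume y: "y \<in> {y \<in> S n \<beta> p. psi y \<le> psi c}"
      show "y \<in> insert c Yn"
      proof (cases "psi y = psi c")
        case True
        then have "y = c" using psi_inj[of y c] y cl cb by (auto simp: S_def)
        then show ?thesis by simp
      next
        case False then show ?thesis using y by (auto simp: Yn_def S_def bits_def)
      qed
    qed
  qed (use cS in \<open>auto simp: Yn_def S_def bits_def\<close>)
  have "c \<notin> Yn" unfolding Yn_def by simp
  hence "ord_in (S n \<beta> p) c = Suc (card Yn)" unfolding ord_in_def eq using fY by simp
  also have "card Yn = (\<Sum>y\<in>Yn. (\<lambda>s. 1::nat) (st \<beta> y))" by simp
  also have "\<dots> = (\<Sum>s<2^(\<beta>-1). 1 * card {y\<in>Yn. st \<beta> y = s})"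
    by (rule fiber[OF fY]) (rule st_less)
  also have "\<dots> = (\<Sum>s<2^(\<beta>-1). V \<beta> p c n s)"
  proof -
    have "card {y\<in>Yn. st \<beta> y = s} = V \<beta> p c n s" for s
      unfolding V_def Yn_def using cl by (intro arg_cong[where f=card]) auto
    then show ?thesis by simp
  qed
  finally show ?thesis by simp
qed



lemma steps_0[simp]: "steps P 0 c = c" by (simp add: steps_def)
lemma steps_add: "steps P (a + b) c = steps P b (steps P a c)"
  unfolding steps_def by (metis add.commute funpow_add comp_apply)
lemma nat_num_mult[simp]: "nat (numeral k * int n) = numeral k * n"
  by (simp add: nat_mult_distrib)
lemma nat_int_div[simp]: "nat (int s div numeral k) = s div numeral k"
  by (metis nat_int of_nat_numeral zdiv_int)

lemma steps_seq: "steps P a c = c1 \<Longrightarrow> steps P b c1 = c2 \<Longrightarrow> steps P (a + b) c = c2"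
  by (simp add: steps_add)
lemma steps_Suc: "steps P (Suc n) c = steps P n (step P c)"
  by (simp add: steps_def funpow_Suc_right del: funpow.simps)
lemma steps_1: "steps P (Suc 0) c = step P c" by (simp add: steps_def)

fun sl :: "instr \<Rightarrow> bool" where
  "sl (Jle r l) = False" | "sl (Jmp l) = False" | "sl Halt = False" | "sl _ = True"

definition em :: "instr \<Rightarrow> (nat \<Rightarrow> int) \<Rightarrow> (nat \<Rightarrow> int)" where
  "em i m = snd (exec_instr i (0, m))"

definition run :: "instr list \<Rightarrow> (nat \<Rightarrow> int) \<Rightarrow> (nat \<Rightarrow> int)" where
  "run B m = fold em B m"

lemma run_simps[simp]: "run [] m = m" "run (i # B) m = run B (em i m)"
  by (simp_all add: run_def)

lemma run_append: "run (A @ B) m = run B (run A m)" by (simp add: run_def)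

lemma em_simps[simp]:
  "em (Const r k) m = m(r := k)"
  "em (Add r a b) m = m(r := m a + m b)"
  "em (Sub r a b) m = m(r := m a - m b)"
  "em (Mul r a b) m = m(r := m a * m b)"
  "em (Div r a b) m = m(r := m a div m b)"
  "em (Mod r a b) m = m(r := m a mod m b)"
  "em (Load r a) m = m(r := m (nat (m a)))"
  "em (Store a r) m = m(nat (m a) := m r)"
  by (simp_all add: em_def)

lemma exec_sl: "sl i \<Longrightarrow> exec_instr i (pc, m) = (pc + 1, em i m)"
  by (cases i) (simp_all add: em_def)

lemma block:
  assumes "take (length B) (drop pc P) = B" "list_all sl B"
  shows "steps P (length B) (pc, m) = (pc + length B, run B m)"
  using assms
proof (induction B arbitrary: pc m)
  case Nil then show ?case by simp
next
  case (Cons i B)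
  have len: "pc < length P" using Cons.prems(1)
    by (metis drop_all length_0_conv list.distinct(1) not_less take_Nil)
  have Pi: "P ! pc = i" using Cons.prems(1) len
    by (metis Cons_nth_drop_Suc list.inject take_Suc_Cons length_Cons)
  have nh: "\<not> halted P (pc, m)" using len Pi Cons.prems(2) by (auto simp: halted_def)
  have st: "step P (pc, m) = (pc + 1, em i m)"
    using nh Pi Cons.prems(2) by (simp add: step_def exec_sl)
  have tk: "take (length B) (drop (Suc pc) P) = B" using Cons.prems(1) len
    by (metis Cons_nth_drop_Suc list.inject take_Suc_Cons length_Cons)
  have "steps P (length (i # B)) (pc, m) = steps P (length B) (step P (pc, m))"
    by (simp add: steps_Suc)
  also have "\<dots> = (Suc pc + length B, run B (em i m))"
    using Cons.IH[OF tk] Cons.prems(2) st by simp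
  finally show ?case by simp
qed

lemma block':
  assumes "take k (drop pc P) = B" "length B = k" "list_all sl B"
  shows "steps P k (pc, m) = (pc + k, run B m)"
  using block[of B pc P m] assms by simp

lemma jle_nt: "P ! pc = Jle r l \<Longrightarrow> pc < length P \<Longrightarrow> m r > 0 \<Longrightarrow> steps P 1 (pc, m) = (pc + 1, m)"
  by (simp add: steps_def step_def halted_def)
lemma jle_t: "P ! pc = Jle r l \<Longrightarrow> pc < length P \<Longrightarrow> m r \<le> 0 \<Longrightarrow> steps P 1 (pc, m) = (l, m)"
  by (simp add: steps_def step_def halted_def)
lemma jmp: "P ! pc = Jmp l \<Longrightarrow> pc < length P \<Longrightarrow> steps P 1 (pc, m) = (l, m)"
  by (simp add: steps_def step_def halted_def)

lemma loop:
  assumes body: "\<And>i m. i < N \<Longrightarrow> I i m \<Longrightarrow> \<exists>m'. steps P c (L, m) = (L, m') \<and> I (Suc i) m'"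
    and I0: "I 0 m"
  shows "\<exists>m'. steps P (N * c) (L, m) = (L, m') \<and> I N m'"
proof -
  have "i \<le> N \<Longrightarrow> \<exists>m'. steps P (i * c) (L, m) = (L, m') \<and> I i m'" for i
  proof (induction i)
    case 0 then show ?case using I0 by simp
  next
    case (Suc i)
    then obtain m1 where m1: "steps P (i * c) (L, m) = (L, m1)" "I i m1" by auto
    from body[OF _ m1(2)] Suc.prems obtain m2 where "steps P c (L, m1) = (L, m2)" "I (Suc i) m2" by auto
    moreover have "steps P (Suc i * c) (L,m) = steps P c (steps P (i*c) (L,m))"
      by (metis steps_add mult_Suc add.commute)
    ultimately show ?case using m1 by auto
  qed
  then show ?thesis by simp
qed

lemma space_bound: "space_used P t c \<le> 3 * t"
proof -
  have "card (step_cells P (steps P i c)) \<le> 3" for i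
  proof -
    obtain pc m where "steps P i c = (pc, m)" by (cases "steps P i c")
    then show ?thesis
      by (cases "P ! pc") (auto simp: step_cells_def card_insert_if)
  qed
  then have "card (\<Union>i<t. step_cells P (steps P i c)) \<le> (\<Sum>i<t. 3)"
    by (intro order_trans[OF card_UN_le] sum_mono) auto
  then show ?thesis by (simp add: space_used_def)
qed



definition prog :: "nat \<Rightarrow> nat \<Rightarrow> instr list" where
  "prog \<beta> p = [
    Add 0 0 0,
    Store 0 1,
    Const 1 (2),
    Div 0 0 1,
    Const 1 (22),
    Add 1 1 0,
    Add 1 1 0,
    Store 1 2,
    Const 1 (23),
    Add 1 1 0,
    Add 1 1 0,
    Store 1 3,
    Const 1 (24),
    Add 1 1 0,
    Add 1 1 0,
    Store 1 4,
    Const 1 (25),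
    Add 1 1 0,
    Add 1 1 0,
    Store 1 5,
    Const 1 (26),
    Add 1 1 0,
    Add 1 1 0,
    Store 1 6,
    Const 1 (27),
    Add 1 1 0,
    Add 1 1 0,
    Store 1 7,
    Const 1 (28),
    Add 1 1 0,
    Add 1 1 0,
    Store 1 8,
    Const 1 (29),
    Add 1 1 0,
    Add 1 1 0,
    Store 1 9,
    Const 1 (30),
    Add 1 1 0,
    Add 1 1 0,
    Store 1 10,
    Const 1 (31),
    Add 1 1 0,
    Add 1 1 0,
    Store 1 11,
    Const 1 (32),
    Add 1 1 0,
    Add 1 1 0,
    Store 1 12,
    Const 1 (33),
    Add 1 1 0,
    Add 1 1 0,
    Store 1 13,
    Const 1 (34),
    Add 1 1 0,
    Add 1 1 0,
    Store 1 14,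
    Const 1 (35),
    Add 1 1 0,
    Add 1 1 0,
    Store 1 15,
    Const 1 (36),
    Add 1 1 0,
    Add 1 1 0,
    Store 1 16,
    Const 1 (37),
    Add 1 1 0,
    Add 1 1 0,
    Store 1 17,
    Const 1 (38),
    Add 1 1 0,
    Add 1 1 0,
    Store 1 18,
    Const 1 (39),
    Add 1 1 0,
    Add 1 1 0,
    Store 1 19,
    Const 1 (40),
    Add 1 1 0,
    Add 1 1 0,
    Store 1 20,
    Add 1 0 0,
    Load 1 1,
    Const 2 (21),
    Add 2 2 0,
    Add 2 2 0,
    Store 2 1,
    Const 1 (21),
    Const 2 (20),
    Add 2 2 0,
    Add 2 2 0,
    Const 4 (1),
    Add 3 0 4,
    Sub 3 3 1,
    Jle 3 99,
    Load 5 1,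
    Add 6 2 1,
    Store 6 5,
    Add 1 1 4,
    Jmp 91,
    Add 7 2 0,
    Const 8 (21),
    Add 7 7 8,
    Const 9 (int (2 ^ (\<beta> - 1))),
    Const 10 (0),
    Sub 3 9 10,
    Jle 3 116,
    Const 8 (2),
    Div 11 10 8,
    Mod 12 10 8,
    Add 11 11 7,
    Load 11 11,
    Add 11 11 12,
    Add 13 7 10,
    Store 13 11,
    Add 10 10 4,
    Jmp 104,
    Add 14 7 9,
    Add 15 14 9,
    Const 16 (0),
    Const 17 (0),
    Sub 3 0 17,
    Jle 3 183,
    Add 18 2 17,
    Add 18 18 4,
    Load 18 18,
    Const 19 (int \<beta>),
    Add 8 17 4,
    Add 8 8 4,
    Div 19 19 8,
    Div 19 19 19,
    Const 10 (0),
    Sub 3 9 10,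
    Jle 3 169,
    Add 11 14 10,
    Load 12 11,
    Const 13 (0),
    Store 11 13,
    Add 11 7 10,
    Load 11 11,
    Const 13 (int p + 1),
    Add 8 11 4,
    Div 8 13 8,
    Div 8 8 8,
    Add 8 8 19,
    Div 8 8 8,
    Mul 8 8 12,
    Add 20 10 10,
    Mod 20 20 9,
    Add 20 20 15,
    Load 13 20,
    Add 13 13 8,
    Store 20 13,
    Add 8 11 4,
    Add 8 8 4,
    Const 13 (int p + 1),
    Div 8 13 8,
    Div 8 8 8,
    Add 8 8 19,
    Div 8 8 8,
    Mul 8 8 12,
    Add 20 10 10,
    Add 20 20 4,
    Mod 20 20 9,
    Add 20 20 15,
    Load 13 20,
    Add 13 13 8,
    Store 20 13,
    Add 10 10 4,
    Jmp 131,
    Add 20 16 16,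
    Mod 20 20 9,
    Add 20 20 15,
    Load 13 20,
    Add 13 13 18,
    Store 20 13,
    Add 16 16 16,
    Add 16 16 18,
    Mod 16 16 9,
    Add 13 14 15,
    Sub 14 13 14,
    Sub 15 13 14,
    Add 17 17 4,
    Jmp 120,
    Const 13 (1),
    Const 10 (0),
    Sub 3 9 10,
    Jle 3 192,
    Add 11 14 10,
    Load 11 11,
    Add 13 13 11,
    Add 10 10 4,
    Jmp 185,
    Const 0 (0),
    Add 0 0 13,
    Halt]"

lemma len_prog: "length (prog \<beta> p) = 195" by (simp add: prog_def)

lemma seg_0: "take 4 (drop 0 (prog \<beta> p)) = [Add 0 0 0, Store 0 1, Const 1 (2), Div 0 0 1]" by (simp add: prog_def)

lemma seg_4: "take 76 (drop 4 (prog \<beta> p)) = [Const 1 (22), Add 1 1 0, Add 1 1 0, Store 1 2, Const 1 (23), Add 1 1 0, Add 1 1 0, Store 1 3, Const 1 (24), Add 1 1 0, Add 1 1 0, Store 1 4, Const 1 (25), Add 1 1 0, Add 1 1 0, Store 1 5, Const 1 (26), Add 1 1 0, Add 1 1 0, Store 1 6, Const 1 (27), Add 1 1 0, Add 1 1 0, Store 1 7, Const 1 (28), Add 1 1 0, Add 1 1 0, Store 1 8, Const 1 (29), Add 1 1 0, Add 1 1 0, Store 1 9, Const 1 (30), Add 1 1 0, Add 1 1 0, Store 1 10, Const 1 (31), Add 1 1 0, Add 1 1 0, Store 1 11, Const 1 (32), Add 1 1 0, Add 1 1 0, Store 1 12, Const 1 (33), Add 1 1 0, Add 1 1 0, Store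 1 13, Const 1 (34), Add 1 1 0, Add 1 1 0, Store 1 14, Const 1 (35), Add 1 1 0, Add 1 1 0, Store 1 15, Const 1 (36), Add 1 1 0, Add 1 1 0, Store 1 16, Const 1 (37), Add 1 1 0, Add 1 1 0, Store 1 17, Const 1 (38), Add 1 1 0, Add 1 1 0, Store 1 18, Const 1 (39), Add 1 1 0, Add 1 1 0, Store 1 19, Const 1 (40), Add 1 1 0, Add 1 1 0, Store 1 20]" by (simp add: prog_def)

lemma seg_80: "take 6 (drop 80 (prog \<beta> p)) = [Add 1 0 0, Load 1 1, Const 2 (21), Add 2 2 0, Add 2 2 0, Store 2 1]" by (simp add: prog_def)

lemma seg_86: "take 5 (drop 86 (prog \<beta> p)) = [Const 1 (21), Const 2 (20), Add 2 2 0, Add 2 2 0, Const 4 (1)]" by (simp add: prog_def)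

lemma seg_91: "take 2 (drop 91 (prog \<beta> p)) = [Add 3 0 4, Sub 3 3 1]" by (simp add: prog_def)

lemma seg_94: "take 4 (drop 94 (prog \<beta> p)) = [Load 5 1, Add 6 2 1, Store 6 5, Add 1 1 4]" by (simp add: prog_def)

lemma seg_99: "take 5 (drop 99 (prog \<beta> p)) = [Add 7 2 0, Const 8 (21), Add 7 7 8, Const 9 (int (2 ^ (\<beta> - 1))), Const 10 (0)]" by (simp add: prog_def)

lemma seg_104: "take 1 (drop 104 (prog \<beta> p)) = [Sub 3 9 10]" by (simp add: prog_def)

lemma seg_106: "take 9 (drop 106 (prog \<beta> p)) = [Const 8 (2), Div 11 10 8, Mod 12 10 8, Add 11 11 7, Load 11 11, Add 11 11 12, Add 13 7 10, Store 13 11, Add 10 10 4]" by (simp add: prog_def)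

lemma seg_116: "take 4 (drop 116 (prog \<beta> p)) = [Add 14 7 9, Add 15 14 9, Const 16 (0), Const 17 (0)]" by (simp add: prog_def)

lemma seg_120: "take 1 (drop 120 (prog \<beta> p)) = [Sub 3 0 17]" by (simp add: prog_def)

lemma seg_122: "take 9 (drop 122 (prog \<beta> p)) = [Add 18 2 17, Add 18 18 4, Load 18 18, Const 19 (int \<beta>), Add 8 17 4, Add 8 8 4, Div 19 19 8, Div 19 19 19, Const 10 (0)]" by (simp add: prog_def)

lemma seg_131: "take 1 (drop 131 (prog \<beta> p)) = [Sub 3 9 10]" by (simp add: prog_def)

lemma seg_133: "take 35 (drop 133 (prog \<beta> p)) = [Add 11 14 10, Load 12 11, Const 13 (0), Store 11 13, Add 11 7 10, Load 11 11, Const 13 (int p + 1), Add 8 11 4, Div 8 13 8, Div 8 8 8, Add 8 8 19, Div 8 8 8, Mul 8 8 12, Add 20 10 10, Mod 20 20 9, Add 20 20 15, Load 13 20, Add 13 13 8, Store 20 13, Add 8 11 4, Add 8 8 4, Const 13 (int p + 1), Div 8 13 8, Div 8 8 8, Add 8 8 19, Div 8 8 8, Mul 8 8 12, Add 20 10 10, Add 20 20 4, Mod 20 20 9, Add 20 20 15, Load 13 20, Add 13 13 8, Store 20 13, Add 10 10 4]" by (simp add: prog_def)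

lemma seg_169: "take 13 (drop 169 (prog \<beta> p)) = [Add 20 16 16, Mod 20 20 9, Add 20 20 15, Load 13 20, Add 13 13 18, Store 20 13, Add 16 16 16, Add 16 16 18, Mod 16 16 9, Add 13 14 15, Sub 14 13 14, Sub 15 13 14, Add 17 17 4]" by (simp add: prog_def)

lemma seg_183: "take 2 (drop 183 (prog \<beta> p)) = [Const 13 (1), Const 10 (0)]" by (simp add: prog_def)

lemma seg_185: "take 1 (drop 185 (prog \<beta> p)) = [Sub 3 9 10]" by (simp add: prog_def)

lemma seg_187: "take 4 (drop 187 (prog \<beta> p)) = [Add 11 14 10, Load 11 11, Add 13 13 11, Add 10 10 4]" by (simp add: prog_def)

lemma seg_192: "take 2 (drop 192 (prog \<beta> p)) = [Const 0 (0), Add 0 0 13]" by (simp add: prog_def)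

lemma ctl_93: "prog \<beta> p ! 93 = Jle 3 99" by (simp add: prog_def)

lemma ctl_98: "prog \<beta> p ! 98 = Jmp 91" by (simp add: prog_def)

lemma ctl_105: "prog \<beta> p ! 105 = Jle 3 116" by (simp add: prog_def)

lemma ctl_115: "prog \<beta> p ! 115 = Jmp 104" by (simp add: prog_def)

lemma ctl_121: "prog \<beta> p ! 121 = Jle 3 183" by (simp add: prog_def)

lemma ctl_132: "prog \<beta> p ! 132 = Jle 3 169" by (simp add: prog_def)

lemma ctl_168: "prog \<beta> p ! 168 = Jmp 131" by (simp add: prog_def)

lemma ctl_182: "prog \<beta> p ! 182 = Jmp 120" by (simp add: prog_def)

lemma ctl_186: "prog \<beta> p ! 186 = Jle 3 192" by (simp add: prog_def)

lemma ctl_191: "prog \<beta> p ! 191 = Jmp 185" by (simp add: prog_def)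

lemma ctl_194: "prog \<beta> p ! 194 = Halt" by (simp add: prog_def)

lemma nth_prog:
  "prog \<beta> p ! 0 = Add 0 0 0"
  "prog \<beta> p ! Suc 0 = Store 0 1"
  "prog \<beta> p ! 2 = Const 1 (2)"
  "prog \<beta> p ! 3 = Div 0 0 1"
  "prog \<beta> p ! 4 = Const 1 (22)"
  "prog \<beta> p ! 5 = Add 1 1 0"
  "prog \<beta> p ! 6 = Add 1 1 0"
  "prog \<beta> p ! 7 = Store 1 2"
  "prog \<beta> p ! 8 = Const 1 (23)"
  "prog \<beta> p ! 9 = Add 1 1 0"
  "prog \<beta> p ! 10 = Add 1 1 0"
  "prog \<beta> p ! 11 = Store 1 3"
  "prog \<beta> p ! 12 = Const 1 (24)"
  "prog \<beta> p ! 13 = Add 1 1 0"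
  "prog \<beta> p ! 14 = Add 1 1 0"
  "prog \<beta> p ! 15 = Store 1 4"
  "prog \<beta> p ! 16 = Const 1 (25)"
  "prog \<beta> p ! 17 = Add 1 1 0"
  "prog \<beta> p ! 18 = Add 1 1 0"
  "prog \<beta> p ! 19 = Store 1 5"
  "prog \<beta> p ! 20 = Const 1 (26)"
  "prog \<beta> p ! 21 = Add 1 1 0"
  "prog \<beta> p ! 22 = Add 1 1 0"
  "prog \<beta> p ! 23 = Store 1 6"
  "prog \<beta> p ! 24 = Const 1 (27)"
  "prog \<beta> p ! 25 = Add 1 1 0"
  "prog \<beta> p ! 26 = Add 1 1 0"
  "prog \<beta> p ! 27 = Store 1 7"
  "prog \<beta> p ! 28 = Const 1 (28)"
  "prog \<beta> p ! 29 = Add 1 1 0"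
  "prog \<beta> p ! 30 = Add 1 1 0"
  "prog \<beta> p ! 31 = Store 1 8"
  "prog \<beta> p ! 32 = Const 1 (29)"
  "prog \<beta> p ! 33 = Add 1 1 0"
  "prog \<beta> p ! 34 = Add 1 1 0"
  "prog \<beta> p ! 35 = Store 1 9"
  "prog \<beta> p ! 36 = Const 1 (30)"
  "prog \<beta> p ! 37 = Add 1 1 0"
  "prog \<beta> p ! 38 = Add 1 1 0"
  "prog \<beta> p ! 39 = Store 1 10"
  "prog \<beta> p ! 40 = Const 1 (31)"
  "prog \<beta> p ! 41 = Add 1 1 0"
  "prog \<beta> p ! 42 = Add 1 1 0"
  "prog \<beta> p ! 43 = Store 1 11"
  "prog \<beta> p ! 44 = Const 1 (32)"
  "prog \<beta> p ! 45 = Add 1 1 0"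
  "prog \<beta> p ! 46 = Add 1 1 0"
  "prog \<beta> p ! 47 = Store 1 12"
  "prog \<beta> p ! 48 = Const 1 (33)"
  "prog \<beta> p ! 49 = Add 1 1 0"
  "prog \<beta> p ! 50 = Add 1 1 0"
  "prog \<beta> p ! 51 = Store 1 13"
  "prog \<beta> p ! 52 = Const 1 (34)"
  "prog \<beta> p ! 53 = Add 1 1 0"
  "prog \<beta> p ! 54 = Add 1 1 0"
  "prog \<beta> p ! 55 = Store 1 14"
  "prog \<beta> p ! 56 = Const 1 (35)"
  "prog \<beta> p ! 57 = Add 1 1 0"
  "prog \<beta> p ! 58 = Add 1 1 0"
  "prog \<beta> p ! 59 = Store 1 15"
  "prog \<beta> p ! 60 = Const 1 (36)"
  "prog \<beta> p ! 61 = Add 1 1 0"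
  "prog \<beta> p ! 62 = Add 1 1 0"
  "prog \<beta> p ! 63 = Store 1 16"
  "prog \<beta> p ! 64 = Const 1 (37)"
  "prog \<beta> p ! 65 = Add 1 1 0"
  "prog \<beta> p ! 66 = Add 1 1 0"
  "prog \<beta> p ! 67 = Store 1 17"
  "prog \<beta> p ! 68 = Const 1 (38)"
  "prog \<beta> p ! 69 = Add 1 1 0"
  "prog \<beta> p ! 70 = Add 1 1 0"
  "prog \<beta> p ! 71 = Store 1 18"
  "prog \<beta> p ! 72 = Const 1 (39)"
  "prog \<beta> p ! 73 = Add 1 1 0"
  "prog \<beta> p ! 74 = Add 1 1 0"
  "prog \<beta> p ! 75 = Store 1 19"
  "prog \<beta> p ! 76 = Const 1 (40)"
  "prog \<beta> p ! 77 = Add 1 1 0"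
  "prog \<beta> p ! 78 = Add 1 1 0"
  "prog \<beta> p ! 79 = Store 1 20"
  "prog \<beta> p ! 80 = Add 1 0 0"
  "prog \<beta> p ! 81 = Load 1 1"
  "prog \<beta> p ! 82 = Const 2 (21)"
  "prog \<beta> p ! 83 = Add 2 2 0"
  "prog \<beta> p ! 84 = Add 2 2 0"
  "prog \<beta> p ! 85 = Store 2 1"
  "prog \<beta> p ! 86 = Const 1 (21)"
  "prog \<beta> p ! 87 = Const 2 (20)"
  "prog \<beta> p ! 88 = Add 2 2 0"
  "prog \<beta> p ! 89 = Add 2 2 0"
  "prog \<beta> p ! 90 = Const 4 (1)"
  "prog \<beta> p ! 91 = Add 3 0 4"
  "prog \<beta> p ! 92 = Sub 3 3 1"
  "prog \<beta> p ! 93 = Jle 3 99"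
  "prog \<beta> p ! 94 = Load 5 1"
  "prog \<beta> p ! 95 = Add 6 2 1"
  "prog \<beta> p ! 96 = Store 6 5"
  "prog \<beta> p ! 97 = Add 1 1 4"
  "prog \<beta> p ! 98 = Jmp 91"
  "prog \<beta> p ! 99 = Add 7 2 0"
  "prog \<beta> p ! 100 = Const 8 (21)"
  "prog \<beta> p ! 101 = Add 7 7 8"
  "prog \<beta> p ! 102 = Const 9 (int (2 ^ (\<beta> - 1)))"
  "prog \<beta> p ! 103 = Const 10 (0)"
  "prog \<beta> p ! 104 = Sub 3 9 10"
  "prog \<beta> p ! 105 = Jle 3 116"
  "prog \<beta> p ! 106 = Const 8 (2)"
  "prog \<beta> p ! 107 = Div 11 10 8"
  "prog \<beta> p ! 108 = Mod 12 10 8"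
  "prog \<beta> p ! 109 = Add 11 11 7"
  "prog \<beta> p ! 110 = Load 11 11"
  "prog \<beta> p ! 111 = Add 11 11 12"
  "prog \<beta> p ! 112 = Add 13 7 10"
  "prog \<beta> p ! 113 = Store 13 11"
  "prog \<beta> p ! 114 = Add 10 10 4"
  "prog \<beta> p ! 115 = Jmp 104"
  "prog \<beta> p ! 116 = Add 14 7 9"
  "prog \<beta> p ! 117 = Add 15 14 9"
  "prog \<beta> p ! 118 = Const 16 (0)"
  "prog \<beta> p ! 119 = Const 17 (0)"
  "prog \<beta> p ! 120 = Sub 3 0 17"
  "prog \<beta> p ! 121 = Jle 3 183"
  "prog \<beta> p ! 122 = Add 18 2 17"
  "prog \<beta> p ! 123 = Add 18 18 4"
  "prog \<beta> p ! 124 = Load 18 18"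
  "prog \<beta> p ! 125 = Const 19 (int \<beta>)"
  "prog \<beta> p ! 126 = Add 8 17 4"
  "prog \<beta> p ! 127 = Add 8 8 4"
  "prog \<beta> p ! 128 = Div 19 19 8"
  "prog \<beta> p ! 129 = Div 19 19 19"
  "prog \<beta> p ! 130 = Const 10 (0)"
  "prog \<beta> p ! 131 = Sub 3 9 10"
  "prog \<beta> p ! 132 = Jle 3 169"
  "prog \<beta> p ! 133 = Add 11 14 10"
  "prog \<beta> p ! 134 = Load 12 11"
  "prog \<beta> p ! 135 = Const 13 (0)"
  "prog \<beta> p ! 136 = Store 11 13"
  "prog \<beta> p ! 137 = Add 11 7 10"
  "prog \<beta> p ! 138 = Load 11 11"
  "prog \<beta> p ! 139 = Const 13 (int p + 1)"
  "prog \<beta> p ! 140 = Add 8 11 4"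
  "prog \<beta> p ! 141 = Div 8 13 8"
  "prog \<beta> p ! 142 = Div 8 8 8"
  "prog \<beta> p ! 143 = Add 8 8 19"
  "prog \<beta> p ! 144 = Div 8 8 8"
  "prog \<beta> p ! 145 = Mul 8 8 12"
  "prog \<beta> p ! 146 = Add 20 10 10"
  "prog \<beta> p ! 147 = Mod 20 20 9"
  "prog \<beta> p ! 148 = Add 20 20 15"
  "prog \<beta> p ! 149 = Load 13 20"
  "prog \<beta> p ! 150 = Add 13 13 8"
  "prog \<beta> p ! 151 = Store 20 13"
  "prog \<beta> p ! 152 = Add 8 11 4"
  "prog \<beta> p ! 153 = Add 8 8 4"
  "prog \<beta> p ! 154 = Const 13 (int p + 1)"
  "prog \<beta> p ! 155 = Div 8 13 8"
  "prog \<beta> p ! 156 = Div 8 8 8"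
  "prog \<beta> p ! 157 = Add 8 8 19"
  "prog \<beta> p ! 158 = Div 8 8 8"
  "prog \<beta> p ! 159 = Mul 8 8 12"
  "prog \<beta> p ! 160 = Add 20 10 10"
  "prog \<beta> p ! 161 = Add 20 20 4"
  "prog \<beta> p ! 162 = Mod 20 20 9"
  "prog \<beta> p ! 163 = Add 20 20 15"
  "prog \<beta> p ! 164 = Load 13 20"
  "prog \<beta> p ! 165 = Add 13 13 8"
  "prog \<beta> p ! 166 = Store 20 13"
  "prog \<beta> p ! 167 = Add 10 10 4"
  "prog \<beta> p ! 168 = Jmp 131"
  "prog \<beta> p ! 169 = Add 20 16 16"
  "prog \<beta> p ! 170 = Mod 20 20 9"
  "prog \<beta> p ! 171 = Add 20 20 15"
  "prog \<beta> p ! 172 = Load 13 20"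
  "prog \<beta> p ! 173 = Add 13 13 18"
  "prog \<beta> p ! 174 = Store 20 13"
  "prog \<beta> p ! 175 = Add 16 16 16"
  "prog \<beta> p ! 176 = Add 16 16 18"
  "prog \<beta> p ! 177 = Mod 16 16 9"
  "prog \<beta> p ! 178 = Add 13 14 15"
  "prog \<beta> p ! 179 = Sub 14 13 14"
  "prog \<beta> p ! 180 = Sub 15 13 14"
  "prog \<beta> p ! 181 = Add 17 17 4"
  "prog \<beta> p ! 182 = Jmp 120"
  "prog \<beta> p ! 183 = Const 13 (1)"
  "prog \<beta> p ! 184 = Const 10 (0)"
  "prog \<beta> p ! 185 = Sub 3 9 10"
  "prog \<beta> p ! 186 = Jle 3 192"
  "prog \<beta> p ! 187 = Add 11 14 10"
  "prog \<beta> p ! 188 = Load 11 11"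
  "prog \<beta> p ! 189 = Add 13 13 11"
  "prog \<beta> p ! 190 = Add 10 10 4"
  "prog \<beta> p ! 191 = Jmp 185"
  "prog \<beta> p ! 192 = Const 0 (0)"
  "prog \<beta> p ! 193 = Add 0 0 13"
  "prog \<beta> p ! 194 = Halt"
  by (simp_all add: prog_def)



lemma steps_num: "steps P (numeral k) c = steps P (pred_numeral k) (step P c)"
  by (simp add: numeral_eq_Suc steps_Suc)

lemma step_prog: "pc < 195 \<Longrightarrow> prog \<beta> p ! pc \<noteq> Halt \<Longrightarrow> step (prog \<beta> p) (pc, m) = exec_instr (prog \<beta> p ! pc) (pc, m)"
  by (simp add: step_def halted_def len_prog)

definition Icopy :: "nat \<Rightarrow> nat list \<Rightarrow> nat \<Rightarrow> (nat \<Rightarrow> int) \<Rightarrow> bool" where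
  "Icopy n c i m \<longleftrightarrow> m 0 = int n \<and> m 1 = int (21 + i) \<and> m 2 = int (2*n+20) \<and> m 4 = 1 \<and>
     (\<forall>j. 1 \<le> j \<and> j \<le> n \<and> j \<le> 20 + i \<longrightarrow> m (2*n+20+j) = int (c!(j-1))) \<and>
     (\<forall>j. 21 \<le> j \<and> j \<le> n \<longrightarrow> m j = int (c!(j-1))) \<and> (\<forall>a\<ge>3*n+41. m a = 0)"

lemma copy_body:
  assumes "i < n - 20" "Icopy n c i m"
  shows "\<exists>m'. steps (prog \<beta> p) 8 (91, m) = (91, m') \<and> Icopy n c (Suc i) m'"
proof -
  have r: "m 0 = int n" "m 1 = int (21 + i)" "m 2 = int (2*n+20)" "m 4 = 1" using assms(2) by (auto simp: Icopy_def)
  have pos: "int n + 1 - int (21 + i) > 0" using assms(1) by simp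
  show ?thesis
    using pos r assms unfolding Icopy_def
    by (simp add: steps_num step_prog nth_prog nat_add_distrib nat_mult_distrib steps_1)
qed


definition savej :: "nat \<Rightarrow> instr list" where
  "savej j = [Const 1 (int (20 + j)), Add 1 1 0, Add 1 1 0, Store 1 j]"

lemma seg4_eq: "take 76 (drop 4 (prog \<beta> p)) = concat (map savej [2..<21])"
  by (simp add: seg_4 savej_def upt_rec)

definition InvS :: "nat \<Rightarrow> nat list \<Rightarrow> nat \<Rightarrow> (nat \<Rightarrow> int) \<Rightarrow> bool" where
  "InvS n c j m \<longleftrightarrow> m 0 = int n \<and> m (2*n) = (if n = 0 then 0 else int (c!0)) \<and>
     (\<forall>i. 2 \<le> i \<and> i < j \<and> i \<le> n \<longrightarrow> m (2*n+20+i) = int (c!(i-1))) \<and>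
     (\<forall>i. j \<le> i \<and> i \<le> n \<longrightarrow> m i = int (c!(i-1))) \<and> (\<forall>a\<ge>3*n+41. m a = 0)"

lemma save_step:
  assumes "2 \<le> j" "j \<le> 20" "InvS n c j m"
  shows "InvS n c (Suc j) (run (savej j) m)"
proof -
  have m0: "m 0 = int n" using assms(3) by (simp add: InvS_def)
  have e: "run (savej j) m = m(1 := int (2*n+20+j), 2*n+20+j := m j)"
    using assms(1) m0 by (simp add: savej_def nat_add_distrib nat_mult_distrib ac_simps)
  show ?thesis unfolding e using assms unfolding InvS_def
    by (auto simp: nat_add_distrib)
qed

lemma saves:
  assumes "InvS n c 2 m"
  shows "InvS n c 21 (run (concat (map savej [2..<21])) m)"
proof -
  have "k \<le> 19 \<Longrightarrow> InvS n c (2+k) (run (concat (map savej [2..<2+k])) m)" for k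
  proof (induction k)
    case 0 then show ?case using assms by simp
  next
    case (Suc k)
    then have "InvS n c (Suc (2+k)) (run (savej (2+k)) (run (concat (map savej [2..<2+k])) m))"
      by (intro save_step) auto
    then show ?case by (simp add: run_append)
  qed
  from this[of 19] show ?thesis by simp
qed

lemma boot:
  assumes "length c = n"
  shows "\<exists>m'. steps (prog \<beta> p) 91 (init n c) = (91, m') \<and> Icopy n c 0 m'"
proof -
  define m0 where "m0 = snd (init n c)"
  have i0: "init n c = (0, m0)" by (simp add: init_def m0_def)
  have b1: "steps (prog \<beta> p) 4 (0, m0) = (4, run [Add 0 0 0, Store 0 1, Const 1 (2), Div 0 0 1] m0)"
    using block'[OF seg_0] by simp
  define mA where "mA = run [Add 0 0 0, Store 0 1, Const 1 (2), Div 0 0 1] m0"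
  have IA: "InvS n c 2 mA"
    unfolding mA_def m0_def InvS_def init_def using assms by (auto simp: nat_mult_distrib)
  have b2: "steps (prog \<beta> p) 76 (4, mA) = (80, run (concat (map savej [2..<21])) mA)"
  proof -
    have l: "length (concat (map savej [2..<21])) = 76" by (simp add: savej_def upt_rec)
    have a: "list_all sl (concat (map savej [2..<21]))" by (simp add: savej_def upt_rec)
    show ?thesis using block'[OF seg4_eq l a] by simp
  qed
  define mS where "mS = run (concat (map savej [2..<21])) mA"
  have IS: "InvS n c 21 mS" unfolding mS_def by (rule saves[OF IA])
  have b3: "steps (prog \<beta> p) 6 (80, mS) = (86, run [Add 1 0 0, Load 1 1, Const 2 (21), Add 2 2 0, Add 2 2 0, Store 2 1] mS)"
    using block'[OF seg_80] by simp
  define mC where "mC = run [Add 1 0 0, Load 1 1, Const 2 (21), Add 2 2 0, Add 2 2 0, Store 2 1] mS"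
  have b4: "steps (prog \<beta> p) 5 (86, mC) = (91, run [Const 1 (21), Const 2 (20), Add 2 2 0, Add 2 2 0, Const 4 (1)] mC)"
    using block'[OF seg_86] by simp
  define mD where "mD = run [Const 1 (21), Const 2 (20), Add 2 2 0, Add 2 2 0, Const 4 (1)] mC"
  have "Icopy n c 0 mD"
    using IS unfolding mD_def mC_def Icopy_def InvS_def
    by (auto simp: nat_mult_distrib nat_add_distrib)
  moreover have "steps (prog \<beta> p) 91 (init n c) = (91, mD)"
  proof -
    have "steps (prog \<beta> p) (4 + 76 + 6 + 5) (0, m0) = (91, mD)"
      unfolding steps_add b1 mA_def[symmetric] b2 mS_def[symmetric] b3 mC_def[symmetric] b4 mD_def by simp
    then show ?thesis using i0 by simp
  qed
  ultimately show ?thesis by blast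
qed


lemma copy_exit:
  assumes "Icopy n c (n - 20) m"
  shows "steps (prog \<beta> p) 3 (91, m) = (99, m(3 := int n + 1 - int (21 + (n - 20))))"
proof -
  have r: "m 0 = int n" "m 1 = int (21 + (n-20))" "m 4 = 1" using assms by (auto simp: Icopy_def)
  have "int n + 1 - int (21 + (n - 20)) \<le> 0" by simp
  then show ?thesis using r by (simp add: steps_num step_prog nth_prog steps_1)
qed

definition Ipop :: "nat \<Rightarrow> nat \<Rightarrow> nat list \<Rightarrow> nat \<Rightarrow> (nat \<Rightarrow> int) \<Rightarrow> bool" where
  "Ipop M n c s m \<longleftrightarrow> m 0 = int n \<and> m 2 = int (2*n+20) \<and> m 4 = 1 \<and> m 7 = int (3*n+41) \<and>
     m 9 = int M \<and> m 10 = int s \<and>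
     (\<forall>j. 1 \<le> j \<and> j \<le> n \<longrightarrow> m (2*n+20+j) = int (c!(j-1))) \<and>
     (\<forall>t<s. m (3*n+41+t) = int (pop t)) \<and> (\<forall>a\<ge>3*n+41+s. m a = 0)"

lemma copy_to_pop:
  assumes "Icopy n c 0 m"
  shows "\<exists>m'. steps (prog \<beta> p) ((n-20)*8 + 3 + 5) (91, m) = (104, m') \<and> Ipop (2^(\<beta>-1)) n c 0 m'"
proof -
  obtain m1 where m1: "steps (prog \<beta> p) ((n-20)*8) (91, m) = (91, m1)" "Icopy n c (n-20) m1"
    using loop[of "n-20" "Icopy n c" "prog \<beta> p" 8 91 m, OF copy_body assms] by auto
  have e: "steps (prog \<beta> p) 3 (91, m1) = (99, m1(3 := int n + 1 - int (21 + (n - 20))))"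
    by (rule copy_exit[OF m1(2)])
  let ?m2 = "m1(3 := int n + 1 - int (21 + (n - 20)))"
  have s: "steps (prog \<beta> p) 5 (99, ?m2) = (104, run [Add 7 2 0, Const 8 21, Add 7 7 8, Const 9 (int (2 ^ (\<beta> - 1))), Const 10 0] ?m2)"
    using block'[OF seg_99] by simp
  have "steps (prog \<beta> p) ((n-20)*8 + 3 + 5) (91, m) = (104, run [Add 7 2 0, Const 8 21, Add 7 7 8, Const 9 (int (2 ^ (\<beta> - 1))), Const 10 0] ?m2)"
    by (rule steps_seq[OF steps_seq[OF m1(1) e] s])
  moreover have "Ipop (2^(\<beta>-1)) n c 0 (run [Add 7 2 0, Const 8 21, Add 7 7 8, Const 9 (int (2 ^ (\<beta> - 1))), Const 10 0] ?m2)"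
    using m1(2) unfolding Icopy_def Ipop_def by (auto simp: nat_add_distrib)
  ultimately show ?thesis by blast
qed


lemma pop_body:
  assumes "s < M" "Ipop M n c s m"
  shows "\<exists>m'. steps (prog \<beta> p) 12 (104, m) = (104, m') \<and> Ipop M n c (Suc s) m'"
proof -
  have r: "m 7 = int (3*n+41)" "m 9 = int M" "m 10 = int s" "m 4 = 1" using assms(2) by (auto simp: Ipop_def)
  have hv: "m (3*n+41 + s div 2) = int (pop (s div 2))"
  proof (cases "s = 0")
    case True then show ?thesis using assms(2) by (auto simp: Ipop_def pop.simps)
  next
    case False then show ?thesis using assms(2) by (auto simp: Ipop_def)
  qed
  have hv': "m (s div 2 + (3*n+41)) = int (pop (s div 2))" using hv by (simp add: add.commute)
  have hm: "int s mod 2 = int (s mod 2)" by (simp add: zmod_int)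
  have ps: "pop s = pop (s div 2) + s mod 2" by (rule pop_step)
  have pos: "int M - int s > 0" using assms(1) by simp
  show ?thesis
    using pos r hv' hm ps assms(2) unfolding Ipop_def
    by (auto simp: steps_num step_prog nth_prog nat_add_distrib steps_1)
qed



definition contrib :: "nat \<Rightarrow> nat \<Rightarrow> nat list \<Rightarrow> nat \<Rightarrow> nat \<Rightarrow> nat \<Rightarrow> nat \<Rightarrow> nat" where
  "contrib \<beta> p c M k u t = (if ok \<beta> p k u 0 \<and> (2*u) mod M = t then V \<beta> p c k u else 0)
      + (if ok \<beta> p k u 1 \<and> (2*u+1) mod M = t then V \<beta> p c k u else 0)"

definition okm :: "nat \<Rightarrow> nat \<Rightarrow> int \<Rightarrow> nat \<Rightarrow> nat \<Rightarrow> int" where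
  "okm \<beta> p g x b = 0"

definition Gf :: "nat \<Rightarrow> nat \<Rightarrow> nat list \<Rightarrow> (nat \<Rightarrow> int) \<Rightarrow> bool" where
  "Gf M n c m \<longleftrightarrow> m 0 = int n \<and> m 2 = int (2*n+20) \<and> m 4 = 1 \<and> m 7 = int (3*n+41) \<and>
     m 9 = int M \<and> (\<forall>j. 1 \<le> j \<and> j \<le> n \<longrightarrow> m (2*n+20+j) = int (c!(j-1))) \<and>
     (\<forall>t<M. m (3*n+41+t) = int (pop t))"

definition Iin :: "nat \<Rightarrow> nat \<Rightarrow> nat \<Rightarrow> nat \<Rightarrow> nat list \<Rightarrow> nat \<Rightarrow> nat \<Rightarrow> nat \<Rightarrow> nat \<Rightarrow> (nat \<Rightarrow> int) \<Rightarrow> bool" where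
  "Iin \<beta> p M n c a0 b0 k s m \<longleftrightarrow> Gf M n c m \<and> m 14 = int a0 \<and> m 15 = int b0 \<and>
     m 16 = int (st \<beta> (take k c)) \<and> m 17 = int k \<and> m 18 = int (c!k) \<and>
     m 19 = (if k + 1 < \<beta> then 1 else 0) \<and> m 10 = int s \<and>
     (\<forall>t<M. m (a0+t) = (if t < s then 0 else int (V \<beta> p c k t))) \<and>
     (\<forall>t<M. m (b0+t) = int (\<Sum>u<s. contrib \<beta> p c M k u t))"

schematic_goal in_body_exec:
  assumes r: "m 9 = int M" "m 10 = int s" "m 4 = 1" "m 7 = int (3*n+41)" "m 14 = int (3*n+41+M)" "m 15 = int (3*n+41+2*M)"
    "m 19 = g"
    and sM: "int M - int s > 0"
    and tab: "m (3*n+41+s) = int (pop s)" and av: "m (3*n+41+M+s) = int v"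
    and e0: "2 * int s mod int M = int s0" and e1: "(2 * int s + 1) mod int M = int s1"
    and o0: "((int p + 1) div (int (pop s) + 1) div ((int p + 1) div (int (pop s) + 1)) + g) div
             ((int p + 1) div (int (pop s) + 1) div ((int p + 1) div (int (pop s) + 1)) + g) = f0"
    and o1: "((int p + 1) div (2 + int (pop s)) div ((int p + 1) div (2 + int (pop s))) + g) div
             ((int p + 1) div (2 + int (pop s)) div ((int p + 1) div (2 + int (pop s))) + g) = f1"
  shows "steps (prog \<beta> p) 38 (131, m) = ?c"
  using r sM tab av
  by (simp add: steps_num step_prog nth_prog nat_add_distrib steps_1 e0 e1 o0 o1)

schematic_goal in_body_exec_odd:
  assumes r: "m 9 = int M" "m 10 = int s" "m 4 = 1" "m 7 = int (3*n+41)" "m 14 = int (3*n+41+2*M)" "m 15 = int (3*n+41+M)"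
    "m 19 = g"
    and sM: "int M - int s > 0"
    and tab: "m (3*n+41+s) = int (pop s)" and av: "m (3*n+41+2*M+s) = int v"
    and e0: "2 * int s mod int M = int s0" and e1: "(2 * int s + 1) mod int M = int s1"
    and o0: "((int p + 1) div (int (pop s) + 1) div ((int p + 1) div (int (pop s) + 1)) + g) div
             ((int p + 1) div (int (pop s) + 1) div ((int p + 1) div (int (pop s) + 1)) + g) = f0"
    and o1: "((int p + 1) div (2 + int (pop s)) div ((int p + 1) div (2 + int (pop s))) + g) div
             ((int p + 1) div (2 + int (pop s)) div ((int p + 1) div (2 + int (pop s))) + g) = f1"
  shows "steps (prog \<beta> p) 38 (131, m) = ?c"
  using r sM tab av
  by (simp add: steps_num step_prog nth_prog nat_add_distrib steps_1 e0 e1 o0 o1)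

lemma okm_val:
  fixes y :: int and g :: int
  assumes "y > 0" "g = 0 \<or> g = 1"
  shows "((int p + 1) div y div ((int p + 1) div y) + g) div ((int p + 1) div y div ((int p + 1) div y) + g)
         = (if y \<le> int p + 1 \<or> g = 1 then 1 else 0)"
proof -
  have f: "(int p + 1) div y div ((int p + 1) div y) = (if y \<le> int p + 1 then 1 else 0)"
  proof (cases "y \<le> int p + 1")
    case True
    then have "(int p + 1) div y > 0" using assms(1) pos_imp_zdiv_pos_iff[of y "int p + 1"] by simp
    then have "(int p + 1) div y \<ge> 1" by simp
    then show ?thesis using True by simp
  next
    case False
    then have "(int p + 1) div y = 0" using assms(1) by (simp add: div_pos_pos_trivial)
    then show ?thesis using False by simp
  qed
  show ?thesis unfolding f using assms(2) by auto
qed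

lemma in_body_even:
  assumes sM: "s < M" and I: "Iin \<beta> p M n c (3*n+41+M) (3*n+41+2*M) k s m"
  shows "\<exists>m'. steps (prog \<beta> p) 38 (131, m) = (131, m') \<and> Iin \<beta> p M n c (3*n+41+M) (3*n+41+2*M) k (Suc s) m'"
proof -
  define g :: int where "g = (if k + 1 < \<beta> then 1 else 0)"
  define v where "v = V \<beta> p c k s"
  define s0 where "s0 = (2*s) mod M"
  define s1 where "s1 = (2*s+1) mod M"
  define f0 :: int where "f0 = (if ok \<beta> p k s 0 then 1 else 0)"
  define f1 :: int where "f1 = (if ok \<beta> p k s 1 then 1 else 0)"
  have r: "m 9 = int M" "m 10 = int s" "m 4 = 1" "m 7 = int (3*n+41)" "m 14 = int (3*n+41+M)" "m 15 = int (3*n+41+2*M)"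
    "m 19 = g" using I by (auto simp: Iin_def Gf_def g_def)
  have pos: "int M - int s > 0" using sM by simp
  have tab: "m (3*n+41+s) = int (pop s)" using I sM by (auto simp: Iin_def Gf_def)
  have av: "m (3*n+41+M+s) = int v" using I sM by (auto simp: Iin_def v_def)
  have e0: "2 * int s mod int M = int s0" unfolding s0_def by (simp add: zmod_int)
  have e1: "(2 * int s + 1) mod int M = int s1" unfolding s1_def by (simp add: zmod_int add.commute)
  have gg: "g = 0 \<or> g = 1" by (simp add: g_def)
  have o0: "((int p + 1) div (int (pop s) + 1) div ((int p + 1) div (int (pop s) + 1)) + g) div
             ((int p + 1) div (int (pop s) + 1) div ((int p + 1) div (int (pop s) + 1)) + g) = f0"
    using okm_val[of "int (pop s) + 1" g p] gg by (auto simp: f0_def ok_def g_def)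
  have o1: "((int p + 1) div (2 + int (pop s)) div ((int p + 1) div (2 + int (pop s))) + g) div
             ((int p + 1) div (2 + int (pop s)) div ((int p + 1) div (2 + int (pop s))) + g) = f1"
    using okm_val[of "2 + int (pop s)" g p] gg by (auto simp: f1_def ok_def g_def)
  note ex = in_body_exec[OF r pos tab av e0 e1 o0 o1, of \<beta>]
  have s01: "s0 < M" "s1 < M" using sM unfolding s0_def s1_def by auto
  have ctr: "contrib \<beta> p c M k s t = (if s0 = t then nat f0 * v else 0) + (if s1 = t then nat f1 * v else 0)" for t
    unfolding contrib_def s0_def s1_def f0_def f1_def v_def by auto
  have bx: "m (t + (3*n+41+2*M)) = (\<Sum>x<s. int (contrib \<beta> p c M k x t))" if "t < M" for t
    using I that unfolding Iin_def by (simp add: add.commute)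
  show ?thesis
    apply (rule exI, rule conjI, rule ex)
    using I s01 sM bx unfolding Iin_def Gf_def
    apply (auto simp: ctr f0_def f1_def)
    done
qed

lemma in_body_odd:
  assumes sM: "s < M" and I: "Iin \<beta> p M n c (3*n+41+2*M) (3*n+41+M) k s m"
  shows "\<exists>m'. steps (prog \<beta> p) 38 (131, m) = (131, m') \<and> Iin \<beta> p M n c (3*n+41+2*M) (3*n+41+M) k (Suc s) m'"
proof -
  define g :: int where "g = (if k + 1 < \<beta> then 1 else 0)"
  define v where "v = V \<beta> p c k s"
  define s0 where "s0 = (2*s) mod M"
  define s1 where "s1 = (2*s+1) mod M"
  define f0 :: int where "f0 = (if ok \<beta> p k s 0 then 1 else 0)"
  define f1 :: int where "f1 = (if ok \<beta> p k s 1 then 1 else 0)"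
  have r: "m 9 = int M" "m 10 = int s" "m 4 = 1" "m 7 = int (3*n+41)" "m 14 = int (3*n+41+2*M)" "m 15 = int (3*n+41+M)"
    "m 19 = g" using I by (auto simp: Iin_def Gf_def g_def)
  have pos: "int M - int s > 0" using sM by simp
  have tab: "m (3*n+41+s) = int (pop s)" using I sM by (auto simp: Iin_def Gf_def)
  have av: "m (3*n+41+2*M+s) = int v" using I sM by (auto simp: Iin_def v_def)
  have e0: "2 * int s mod int M = int s0" unfolding s0_def by (simp add: zmod_int)
  have e1: "(2 * int s + 1) mod int M = int s1" unfolding s1_def by (simp add: zmod_int add.commute)
  have gg: "g = 0 \<or> g = 1" by (simp add: g_def)
  have o0: "((int p + 1) div (int (pop s) + 1) div ((int p + 1) div (int (pop s) + 1)) + g) div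
             ((int p + 1) div (int (pop s) + 1) div ((int p + 1) div (int (pop s) + 1)) + g) = f0"
    using okm_val[of "int (pop s) + 1" g p] gg by (auto simp: f0_def ok_def g_def)
  have o1: "((int p + 1) div (2 + int (pop s)) div ((int p + 1) div (2 + int (pop s))) + g) div
             ((int p + 1) div (2 + int (pop s)) div ((int p + 1) div (2 + int (pop s))) + g) = f1"
    using okm_val[of "2 + int (pop s)" g p] gg by (auto simp: f1_def ok_def g_def)
  note ex = in_body_exec_odd[OF r pos tab av e0 e1 o0 o1, of \<beta>]
  have s01: "s0 < M" "s1 < M" using sM unfolding s0_def s1_def by auto
  have ctr: "contrib \<beta> p c M k s t = (if s0 = t then nat f0 * v else 0) + (if s1 = t then nat f1 * v else 0)" for t
    unfolding contrib_def s0_def s1_def f0_def f1_def v_def by auto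
  have bx: "m (t + (3*n+41+M)) = (\<Sum>x<s. int (contrib \<beta> p c M k x t))" if "t < M" for t
    using I that unfolding Iin_def by (simp add: add.commute)
  show ?thesis
    apply (rule exI, rule conjI, rule ex)
    using I s01 sM bx unfolding Iin_def Gf_def
    apply (auto simp: ctr f0_def f1_def)
    done
qed



definition Ap :: "nat \<Rightarrow> nat \<Rightarrow> nat \<Rightarrow> nat" where
  "Ap M n k = (if even k then 3*n+41+M else 3*n+41+2*M)"
definition Bp :: "nat \<Rightarrow> nat \<Rightarrow> nat \<Rightarrow> nat" where
  "Bp M n k = (if even k then 3*n+41+2*M else 3*n+41+M)"

definition Iout :: "nat \<Rightarrow> nat \<Rightarrow> nat \<Rightarrow> nat \<Rightarrow> nat list \<Rightarrow> nat \<Rightarrow> (nat \<Rightarrow> int) \<Rightarrow> bool" where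
  "Iout \<beta> p M n c k m \<longleftrightarrow> Gf M n c m \<and> m 14 = int (Ap M n k) \<and> m 15 = int (Bp M n k) \<and>
     m 16 = int (st \<beta> (take k c)) \<and> m 17 = int k \<and>
     (\<forall>t<M. m (Ap M n k + t) = int (V \<beta> p c k t)) \<and> (\<forall>t<M. m (Bp M n k + t) = 0)"

lemma pop_to_out:
  assumes "Ipop (2^(\<beta>-1)) n c (2^(\<beta>-1)) m"
  shows "\<exists>m'. steps (prog \<beta> p) 6 (104, m) = (120, m') \<and> Iout \<beta> p (2^(\<beta>-1)) n c 0 m'"
  using assms unfolding Ipop_def Iout_def Gf_def Ap_def Bp_def
  by (auto simp: steps_num step_prog nth_prog nat_add_distrib steps_1 V0 st_def)

lemma gval: "int \<beta> div (2 + int k) div (int \<beta> div (2 + int k)) = (if k + 1 < \<beta> then 1 else 0)"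
proof -
  define d where "d = int \<beta> div (2 + int k)"
  have "d > 0 \<longleftrightarrow> k + 1 < \<beta>" unfolding d_def using pos_imp_zdiv_pos_iff[of "2 + int k" "int \<beta>"] by auto
  moreover have "d \<ge> 0" unfolding d_def by (simp add: pos_imp_zdiv_nonneg_iff)
  ultimately have "d div d = (if k + 1 < \<beta> then 1 else 0)" by auto
  then show ?thesis unfolding d_def .
qed

lemma out_pre:
  assumes "k < n" "Iout \<beta> p M n c k m"
  shows "\<exists>m'. steps (prog \<beta> p) 11 (120, m) = (131, m') \<and> Iin \<beta> p M n c (Ap M n k) (Bp M n k) k 0 m'"
proof -
  have "\<forall>j. 1 \<le> j \<and> j \<le> n \<longrightarrow> m (2*n+20+j) = int (c!(j-1))" using assms(2) by (simp add: Iout_def Gf_def)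
  from this[rule_format, of "k+1"] assms(1) have d: "m (2*n+20+(k+1)) = int (c!k)" by simp
  have pos: "int n - int k > 0" using assms(1) by simp
  show ?thesis
    using assms(2) d pos unfolding Iout_def Iin_def Gf_def Ap_def Bp_def
    by (auto simp: steps_num step_prog nth_prog nat_add_distrib steps_1 gval)
qed

lemma in_exit:
  assumes "Iin \<beta> p M n c a0 b0 k M m"
  shows "steps (prog \<beta> p) 2 (131, m) = (169, m(3 := 0))"
  using assms unfolding Iin_def Gf_def
  by (simp add: steps_num step_prog nth_prog steps_1)

lemma in_loop:
  assumes "Iin \<beta> p M n c (Ap M n k) (Bp M n k) k 0 m"
  shows "\<exists>m'. steps (prog \<beta> p) (M*38) (131, m) = (131, m') \<and> Iin \<beta> p M n c (Ap M n k) (Bp M n k) k M m'"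
proof (cases "even k")
  case True
  then show ?thesis using assms loop[of M "Iin \<beta> p M n c (Ap M n k) (Bp M n k) k" "prog \<beta> p" 38 131 m]
    in_body_even[of _ M \<beta> p n c k] by (simp add: Ap_def Bp_def)
next
  case False
  then show ?thesis using assms loop[of M "Iin \<beta> p M n c (Ap M n k) (Bp M n k) k" "prog \<beta> p" 38 131 m]
    in_body_odd[of _ M \<beta> p n c k] by (simp add: Ap_def Bp_def)
qed


schematic_goal post_exec_even:
  assumes r: "m 9 = int M" "m 14 = int (3*n+41+M)" "m 15 = int (3*n+41+2*M)" "m 16 = int T"
    "m 17 = int k" "m 18 = int x" "m 4 = 1"
    and e0: "2 * int T mod int M = int T0" and e1: "(2 * int T + int x) mod int M = int T1"
  shows "steps (prog \<beta> p) 14 (169, m) = ?c"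
  using r
  by (simp add: steps_num step_prog nth_prog nat_add_distrib steps_1 e0 e1)



schematic_goal post_exec_odd:
  assumes r: "m 9 = int M" "m 14 = int (3*n+41+2*M)" "m 15 = int (3*n+41+M)" "m 16 = int T"
    "m 17 = int k" "m 18 = int x" "m 4 = 1"
    and e0: "2 * int T mod int M = int T0" and e1: "(2 * int T + int x) mod int M = int T1"
  shows "steps (prog \<beta> p) 14 (169, m) = ?c"
  using r
  by (simp add: steps_num step_prog nth_prog nat_add_distrib steps_1 e0 e1)



lemma vr_lemma:
  assumes b0: "\<beta> > 0" and cS: "c \<in> S n \<beta> p" and kn: "k < n" and M: "M = 2^(\<beta>-1)"
  shows "int (V \<beta> p c (Suc k) t) = (\<Sum>u<M. int (contrib \<beta> p c M k u t))
      + (if t = (2 * st \<beta> (take k c)) mod M then int (c!k) else 0)"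
    and "st \<beta> (take (Suc k) c) = (2 * st \<beta> (take k c) + c!k) mod M"
    and "c!k = 0 \<or> c!k = 1"
proof -
  have cl: "length c = n" and cb: "set c \<subseteq> {0,1}" using cS by (auto simp: S_def)
  have ck: "c!k = 0 \<or> c!k = 1" using cb cl kn by (auto simp: subset_iff nth_mem)
  show "c!k = 0 \<or> c!k = 1" by (rule ck)
  show "int (V \<beta> p c (Suc k) t) = (\<Sum>u<M. int (contrib \<beta> p c M k u t))
      + (if t = (2 * st \<beta> (take k c)) mod M then int (c!k) else 0)"
    using Vrec[OF b0 cS kn, of t] ck unfolding M contrib_def by (auto simp: of_nat_sum)
  show "st \<beta> (take (Suc k) c) = (2 * st \<beta> (take k c) + c!k) mod M"
    using cl kn by (simp add: take_Suc_conv_app_nth st_snoc M)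
qed

lemma out_post_even:
  assumes b0: "\<beta> > 0" and cS: "c \<in> S n \<beta> p" and kn: "k < n" and ev: "even k" and M: "M = 2^(\<beta>-1)"
    and I: "Iin \<beta> p M n c (Ap M n k) (Bp M n k) k M m"
  shows "\<exists>m'. steps (prog \<beta> p) 14 (169, m) = (120, m') \<and> Iout \<beta> p M n c (Suc k) m'"
proof -
  define T where "T = st \<beta> (take k c)"
  define x where "x = c!k"
  define T0 where "T0 = (2*T) mod M"
  define T1 where "T1 = (2*T + x) mod M"
  have Mp: "M > 0" using M by simp
  have I': "Iin \<beta> p M n c (3*n+41+M) (3*n+41+2*M) k M m" using I ev by (simp add: Ap_def Bp_def)
  have r: "m 9 = int M" "m 14 = int (3*n+41+M)" "m 15 = int (3*n+41+2*M)" "m 16 = int T"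
    "m 17 = int k" "m 18 = int x" "m 4 = 1" using I' by (auto simp: Iin_def Gf_def T_def x_def)
  have e0: "2 * int T mod int M = int T0" unfolding T0_def by (simp add: zmod_int)
  have e1: "(2 * int T + int x) mod int M = int T1" unfolding T1_def by (simp add: zmod_int)
  note ex = post_exec_even[OF r e0 e1, of \<beta> p]
  note vr = vr_lemma[OF b0 cS kn M]
  have T0M: "T0 < M" using Mp by (simp add: T0_def)
  have vB: "int (V \<beta> p c (Suc k) t) = (\<Sum>u<M. int (contrib \<beta> p c M k u t)) + (if t = T0 then int x else 0)" for t
    using vr(1)[of t] unfolding T0_def T_def x_def by simp
  have stT: "st \<beta> (take (Suc k) c) = T1" using vr(2) unfolding T1_def T_def x_def by simp
  have bx: "m (t + (3*n+41+2*M)) = (\<Sum>x<M. int (contrib \<beta> p c M k x t))" if "t < M" for t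
    using I' that unfolding Iin_def by (simp add: add.commute)
  show ?thesis
    apply (rule exI, rule conjI, rule ex)
    using I' T0M bx ev unfolding Iout_def Iin_def Gf_def Ap_def Bp_def
    apply (auto simp: vB stT)
    done
qed

lemma out_post_odd:
  assumes b0: "\<beta> > 0" and cS: "c \<in> S n \<beta> p" and kn: "k < n" and ev: "odd k" and M: "M = 2^(\<beta>-1)"
    and I: "Iin \<beta> p M n c (Ap M n k) (Bp M n k) k M m"
  shows "\<exists>m'. steps (prog \<beta> p) 14 (169, m) = (120, m') \<and> Iout \<beta> p M n c (Suc k) m'"
proof -
  define T where "T = st \<beta> (take k c)"
  define x where "x = c!k"
  define T0 where "T0 = (2*T) mod M"
  define T1 where "T1 = (2*T + x) mod M"
  have Mp: "M > 0" using M by simp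
  have I': "Iin \<beta> p M n c (3*n+41+2*M) (3*n+41+M) k M m" using I ev by (simp add: Ap_def Bp_def)
  have r: "m 9 = int M" "m 14 = int (3*n+41+2*M)" "m 15 = int (3*n+41+M)" "m 16 = int T"
    "m 17 = int k" "m 18 = int x" "m 4 = 1" using I' by (auto simp: Iin_def Gf_def T_def x_def)
  have e0: "2 * int T mod int M = int T0" unfolding T0_def by (simp add: zmod_int)
  have e1: "(2 * int T + int x) mod int M = int T1" unfolding T1_def by (simp add: zmod_int)
  note ex = post_exec_odd[OF r e0 e1, of \<beta> p]
  note vr = vr_lemma[OF b0 cS kn M]
  have T0M: "T0 < M" using Mp by (simp add: T0_def)
  have vB: "int (V \<beta> p c (Suc k) t) = (\<Sum>u<M. int (contrib \<beta> p c M k u t)) + (if t = T0 then int x else 0)" for t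
    using vr(1)[of t] unfolding T0_def T_def x_def by simp
  have stT: "st \<beta> (take (Suc k) c) = T1" using vr(2) unfolding T1_def T_def x_def by simp
  have bx: "m (t + (3*n+41+M)) = (\<Sum>x<M. int (contrib \<beta> p c M k x t))" if "t < M" for t
    using I' that unfolding Iin_def by (simp add: add.commute)
  show ?thesis
    apply (rule exI, rule conjI, rule ex)
    using I' T0M bx ev unfolding Iout_def Iin_def Gf_def Ap_def Bp_def
    apply (auto simp: vB stT)
    done
qed



lemma pop_loop:
  assumes "Ipop M n c 0 m"
  shows "\<exists>m'. steps (prog \<beta> p) (M*12) (104, m) = (104, m') \<and> Ipop M n c M m'"
  using loop[of M "Ipop M n c" "prog \<beta> p" 12 104 m] pop_body[of _ M n c _ \<beta> p] assms by blast

lemma Iin_upd3: "Iin \<beta> p M n c (Ap M n k) (Bp M n k) k s m \<Longrightarrow> Iin \<beta> p M n c (Ap M n k) (Bp M n k) k s (m(3 := v))"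
  unfolding Iin_def Gf_def Ap_def Bp_def by auto

lemma out_body:
  assumes b0: "\<beta> > 0" and cS: "c \<in> S n \<beta> p" and kn: "k < n" and M: "M = 2^(\<beta>-1)"
    and I: "Iout \<beta> p M n c k m"
  shows "\<exists>m'. steps (prog \<beta> p) (11 + M*38 + 2 + 14) (120, m) = (120, m') \<and> Iout \<beta> p M n c (Suc k) m'"
proof -
  obtain m1 where m1: "steps (prog \<beta> p) 11 (120, m) = (131, m1)" "Iin \<beta> p M n c (Ap M n k) (Bp M n k) k 0 m1"
    using out_pre[OF kn I] by blast
  obtain m2 where m2: "steps (prog \<beta> p) (M*38) (131, m1) = (131, m2)" "Iin \<beta> p M n c (Ap M n k) (Bp M n k) k M m2"
    using in_loop[OF m1(2)] by blast
  have m3: "steps (prog \<beta> p) 2 (131, m2) = (169, m2(3 := 0))" by (rule in_exit[OF m2(2)])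
  have I3: "Iin \<beta> p M n c (Ap M n k) (Bp M n k) k M (m2(3 := 0))" by (rule Iin_upd3[OF m2(2)])
  obtain m4 where m4: "steps (prog \<beta> p) 14 (169, m2(3 := 0)) = (120, m4)" "Iout \<beta> p M n c (Suc k) m4"
  proof (cases "even k")
    case True then show ?thesis using out_post_even[OF b0 cS kn True M I3] that by blast
  next
    case False then show ?thesis using out_post_odd[OF b0 cS kn _ M I3] False that by blast
  qed
  have "steps (prog \<beta> p) (11 + M*38 + 2 + 14) (120, m) = (120, m4)"
    by (rule steps_seq[OF steps_seq[OF steps_seq[OF m1(1) m2(1)] m3] m4(1)])
  then show ?thesis using m4(2) by blast
qed

lemma out_loop:
  assumes b0: "\<beta> > 0" and cS: "c \<in> S n \<beta> p" and M: "M = 2^(\<beta>-1)"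
    and I: "Iout \<beta> p M n c 0 m"
  shows "\<exists>m'. steps (prog \<beta> p) (n * (11 + M*38 + 2 + 14)) (120, m) = (120, m') \<and> Iout \<beta> p M n c n m'"
  using loop[of n "Iout \<beta> p M n c" "prog \<beta> p" "11 + M*38 + 2 + 14" 120 m] out_body[OF b0 cS _ M] I by blast

definition Isum :: "nat \<Rightarrow> nat \<Rightarrow> nat \<Rightarrow> nat \<Rightarrow> nat list \<Rightarrow> nat \<Rightarrow> (nat \<Rightarrow> int) \<Rightarrow> bool" where
  "Isum \<beta> p M n c s m \<longleftrightarrow> m 9 = int M \<and> m 4 = 1 \<and> m 10 = int s \<and> m 14 = int (Ap M n n) \<and>
     (\<forall>t<M. m (Ap M n n + t) = int (V \<beta> p c n t)) \<and> m 13 = 1 + int (\<Sum>t<s. V \<beta> p c n t)"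

lemma Ap_ge: "Ap M n k \<ge> 41" by (simp add: Ap_def)

lemma sum_body:
  assumes "s < M" "Isum \<beta> p M n c s m"
  shows "\<exists>m'. steps (prog \<beta> p) 7 (185, m) = (185, m') \<and> Isum \<beta> p M n c (Suc s) m'"
proof -
  have d1: "Ap M n n + s \<noteq> 3" "Ap M n n + s \<noteq> 11" using Ap_ge[of M n n] by auto
  have v: "m (Ap M n n + s) = int (V \<beta> p c n s)" using assms unfolding Isum_def by auto
  have pos: "int M - int s > 0" using assms(1) by simp
  show ?thesis
    using assms(2) d1 v pos Ap_ge[of M n n] unfolding Isum_def
    by (auto simp: steps_num step_prog nth_prog nat_add_distrib steps_1)
qed

lemma sum_loop:
  assumes "Isum \<beta> p M n c 0 m"
  shows "\<exists>m'. steps (prog \<beta> p) (M*7) (185, m) = (185, m') \<and> Isum \<beta> p M n c M m'"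
  using loop[of M "Isum \<beta> p M n c" "prog \<beta> p" 7 185 m] sum_body[of _ M \<beta> p n c] assms by blast

lemma out_to_sum:
  assumes "Iout \<beta> p M n c n m"
  shows "\<exists>m'. steps (prog \<beta> p) 4 (120, m) = (185, m') \<and> Isum \<beta> p M n c 0 m'"
  using assms Ap_ge[of M n n] unfolding Iout_def Isum_def Gf_def
  by (auto simp: steps_num step_prog nth_prog nat_add_distrib steps_1)

lemma sum_final:
  assumes "Isum \<beta> p M n c M m"
  shows "\<exists>m'. steps (prog \<beta> p) 4 (185, m) = (194, m') \<and> m' 0 = 1 + int (\<Sum>t<M. V \<beta> p c n t)"
  using assms unfolding Isum_def
  by (auto simp: steps_num step_prog nth_prog nat_add_distrib steps_1)



theorem theorem9:
  fixes \<beta> p :: nat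
  assumes "\<beta> > 0" and "p > 0"
  shows "\<exists>(P :: instr list) (C :: nat). \<forall>n c. c \<in> S n \<beta> p \<longrightarrow>
           (\<exists>t. halted P (steps P t (init n c))
                \<and> snd (steps P t (init n c)) 0 = int (ord_in (S n \<beta> p) c)
                \<and> t \<le> C * n + C
                \<and> space_used P t (init n c) \<le> C * n + C)"
proof -
  define M :: nat where "M = 2^(\<beta>-1)"
  define C0 where "C0 = 120 + 40 * M"
  have main: "\<exists>t. halted (prog \<beta> p) (steps (prog \<beta> p) t (init n c))
                \<and> snd (steps (prog \<beta> p) t (init n c)) 0 = int (ord_in (S n \<beta> p) c)
                \<and> t \<le> C0 * n + C0" if cS: "c \<in> S n \<beta> p" for n c
  proof -
    have cl: "length c = n" using cS by (simp add: S_def)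
    obtain m1 where m1: "steps (prog \<beta> p) 91 (init n c) = (91, m1)" "Icopy n c 0 m1"
      using boot[OF cl] by blast
    obtain m2 where m2: "steps (prog \<beta> p) ((n-20)*8 + 3 + 5) (91, m1) = (104, m2)" "Ipop M n c 0 m2"
      using copy_to_pop[OF m1(2), of \<beta> p] unfolding M_def by blast
    obtain m3 where m3: "steps (prog \<beta> p) (M*12) (104, m2) = (104, m3)" "Ipop M n c M m3"
      using pop_loop[OF m2(2)] by blast
    obtain m4 where m4: "steps (prog \<beta> p) 6 (104, m3) = (120, m4)" "Iout \<beta> p M n c 0 m4"
      using pop_to_out[of \<beta> n c m3 p] m3(2) unfolding M_def by blast
    obtain m5 where m5: "steps (prog \<beta> p) (n * (11 + M*38 + 2 + 14)) (120, m4) = (120, m5)" "Iout \<beta> p M n c n m5"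
      using out_loop[OF assms(1) cS M_def m4(2)] by blast
    obtain m6 where m6: "steps (prog \<beta> p) 4 (120, m5) = (185, m6)" "Isum \<beta> p M n c 0 m6"
      using out_to_sum[OF m5(2)] by blast
    obtain m7 where m7: "steps (prog \<beta> p) (M*7) (185, m6) = (185, m7)" "Isum \<beta> p M n c M m7"
      using sum_loop[OF m6(2)] by blast
    obtain m8 where m8: "steps (prog \<beta> p) 4 (185, m7) = (194, m8)" "m8 0 = 1 + int (\<Sum>t<M. V \<beta> p c n t)"
      using sum_final[OF m7(2)] by blast
    define t where "t = 91 + ((n-20)*8 + 3 + 5) + M*12 + 6 + n * (11 + M*38 + 2 + 14) + 4 + M*7 + 4"
    have st: "steps (prog \<beta> p) t (init n c) = (194, m8)"
      unfolding t_def
      by (rule steps_seq[OF steps_seq[OF steps_seq[OF steps_seq[OF steps_seq[OF steps_seq[OF steps_seq[OF m1(1) m2(1)] m3(1)] m4(1)] m5(1)] m6(1)] m7(1)] m8(1)])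
    have h: "halted (prog \<beta> p) (194, m8)" by (simp add: halted_def nth_prog)
    have o: "m8 0 = int (ord_in (S n \<beta> p) c)" using m8(2) ord_V[OF cS] unfolding M_def by simp
    have "(n-20)*8 \<le> 8*n" by simp
    then have "t \<le> C0 * n + C0" unfolding t_def C0_def by (simp add: algebra_simps)
    then show ?thesis using st h o by (intro exI[of _ t]) auto
  qed
  show ?thesis
  proof (rule exI[of _ "prog \<beta> p"], rule exI[of _ "3*C0"], intro allI impI)
    fix n c assume cS: "c \<in> S n \<beta> p"
    obtain t where t: "halted (prog \<beta> p) (steps (prog \<beta> p) t (init n c))"
      "snd (steps (prog \<beta> p) t (init n c)) 0 = int (ord_in (S n \<beta> p) c)" "t \<le> C0 * n + C0"
      using main[OF cS] by blast
    have "space_used (prog \<beta> p) t (init n c) \<le> 3 * t" by (rule space_bound)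
    also have "\<dots> \<le> (3*C0) * n + 3*C0" using t(3) by simp
    finally show "\<exists>t. halted (prog \<beta> p) (steps (prog \<beta> p) t (init n c))
                \<and> snd (steps (prog \<beta> p) t (init n c)) 0 = int (ord_in (S n \<beta> p) c)
                \<and> t \<le> (3*C0) * n + 3*C0
                \<and> space_used (prog \<beta> p) t (init n c) \<le> (3*C0) * n + 3*C0"
      using t by (intro exI[of _ t]) auto
  qed
qed



end
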